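(* Let $\langle A,B\rangle$ be a recursively inseparable pair. Then $\mathsf{G1}$ holds for the theory $U_{\langle A,B\rangle}$.
   Context: $\langle A,B\rangle$ is a recursively inseparable pair if $A,B$ are disjoint r.e. subsets of $\mathbb{N}$ and there is no recursive $X\subseteq\mathbb{N}$ with $A\subseteq X$ and $X\cap B=\emptyset$. $U_{\langle A,B\rangle}$ is the r.e. theory in the language $\{\mathbf 0,\mathbf S,\mathbf P\}$ ($\mathbf 0$ a constant, $\mathbf S$ unary function, $\mathbf P$ unary relation; $\overline n=\mathbf S^n\mathbf 0$) with axioms: $\overline m\neq\overline n$ for $m\neq n$; $\mathbf P(\overline n)$ for $n\in A$; $\neg\mathbf P(\overline n)$ for $n\in B$. "$\mathsf{G1}$ holds for $T$" means: for every recursively axiomatizable consistent theory $S$, if $T$ is interpretable in $S$ (relative interpretation) then $S$ is incomplete. *)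

theory Defs
  imports Main "HOL-Library.Nat_Bijection"
begin

text \<open>recfn n f: f is a total (mu-)recursive function of arity n; f is applied to
  argument lists of length n (values on other lengths are irrelevant).
  Minimization is only allowed when it is regular (always terminates), which gives
  exactly the total recursive functions.\<close>

inductive recfn :: "nat \<Rightarrow> (nat list \<Rightarrow> nat) \<Rightarrow> bool" where
  rf_zero: "recfn n (\<lambda>xs. 0)"
| rf_succ: "recfn 1 (\<lambda>xs. Suc (hd xs))"
| rf_proj: "i < n \<Longrightarrow> recfn n (\<lambda>xs. xs ! i)"
| rf_comp: "recfn m g \<Longrightarrow> length hs = m \<Longrightarrow> (\<forall>h\<in>set hs. recfn n h) \<Longrightarrow>
            recfn n (\<lambda>xs. g (map (\<lambda>h. h xs) hs))"
| rf_prec: "recfn n g \<Longrightarrow> recfn (Suc (Suc n)) h \<Longrightarrow>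
            recfn (Suc n) (\<lambda>xs. rec_nat (g (tl xs)) (\<lambda>y r. h (r # y # tl xs)) (hd xs))"
| rf_mu:   "recfn (Suc n) g \<Longrightarrow> (\<forall>xs. length xs = n \<longrightarrow> (\<exists>y. g (y # xs) = 0)) \<Longrightarrow>
            recfn n (\<lambda>xs. LEAST y. g (y # xs) = 0)"

definition recursive_set :: "nat set \<Rightarrow> bool" where
  "recursive_set X \<longleftrightarrow> (\<exists>f. recfn 1 f \<and> (\<forall>x. f [x] = (if x \<in> X then 1 else 0)))"

definition re_set :: "nat set \<Rightarrow> bool" where
  "re_set X \<longleftrightarrow> (\<exists>f. recfn 2 f \<and> (\<forall>x. x \<in> X \<longleftrightarrow> (\<exists>y. f [x, y] = 0)))"

definition rec_inseparable :: "nat set \<Rightarrow> nat set \<Rightarrow> bool" where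
  "rec_inseparable A B \<longleftrightarrow> re_set A \<and> re_set B \<and> A \<inter> B = {} \<and>
     \<not> (\<exists>X. recursive_set X \<and> A \<subseteq> X \<and> X \<inter> B = {})"

section \<open>First-order logic with equality (de Bruijn indices)\<close>

datatype tm = Var nat | Fn nat "tm list"
datatype fm = Bot | Eq tm tm | Rel nat "tm list" | Imp fm fm | All fm

text \<open>A language: arities of function symbols and of relation symbols (None = not a symbol).
  Equality is always present.\<close>
type_synonym lang = "(nat \<Rightarrow> nat option) \<times> (nat \<Rightarrow> nat option)"

fun wf_tm :: "lang \<Rightarrow> tm \<Rightarrow> bool" where
  "wf_tm L (Var i) = True"
| "wf_tm L (Fn f ts) = (fst L f = Some (length ts) \<and> (\<forall>t\<in>set ts. wf_tm L t))"

fun wf_fm :: "lang \<Rightarrow> fm \<Rightarrow> bool" where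
  "wf_fm L Bot = True"
| "wf_fm L (Eq s t) = (wf_tm L s \<and> wf_tm L t)"
| "wf_fm L (Rel r ts) = (snd L r = Some (length ts) \<and> (\<forall>t\<in>set ts. wf_tm L t))"
| "wf_fm L (Imp p q) = (wf_fm L p \<and> wf_fm L q)"
| "wf_fm L (All p) = wf_fm L p"

fun fv_tm :: "tm \<Rightarrow> nat set" where
  "fv_tm (Var i) = {i}"
| "fv_tm (Fn f ts) = (\<Union>t\<in>set ts. fv_tm t)"

fun fv_fm :: "fm \<Rightarrow> nat set" where
  "fv_fm Bot = {}"
| "fv_fm (Eq s t) = fv_tm s \<union> fv_tm t"
| "fv_fm (Rel r ts) = (\<Union>t\<in>set ts. fv_tm t)"
| "fv_fm (Imp p q) = fv_fm p \<union> fv_fm q"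
| "fv_fm (All p) = {i. Suc i \<in> fv_fm p}"

definition sentence :: "lang \<Rightarrow> fm \<Rightarrow> bool" where
  "sentence L p \<longleftrightarrow> wf_fm L p \<and> fv_fm p = {}"

fun subst_tm :: "(nat \<Rightarrow> tm) \<Rightarrow> tm \<Rightarrow> tm" where
  "subst_tm \<sigma> (Var i) = \<sigma> i"
| "subst_tm \<sigma> (Fn f ts) = Fn f (map (subst_tm \<sigma>) ts)"

definition up :: "(nat \<Rightarrow> tm) \<Rightarrow> nat \<Rightarrow> tm" where
  "up \<sigma> i = (case i of 0 \<Rightarrow> Var 0 | Suc j \<Rightarrow> subst_tm (\<lambda>m. Var (Suc m)) (\<sigma> j))"

fun subst_fm :: "(nat \<Rightarrow> tm) \<Rightarrow> fm \<Rightarrow> fm" where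
  "subst_fm \<sigma> Bot = Bot"
| "subst_fm \<sigma> (Eq s t) = Eq (subst_tm \<sigma> s) (subst_tm \<sigma> t)"
| "subst_fm \<sigma> (Rel r ts) = Rel r (map (subst_tm \<sigma>) ts)"
| "subst_fm \<sigma> (Imp p q) = Imp (subst_fm \<sigma> p) (subst_fm \<sigma> q)"
| "subst_fm \<sigma> (All p) = All (subst_fm (up \<sigma>) p)"

text \<open>inst p t: instantiate the bound variable 0 of p (the body of a quantifier) by t.\<close>
definition inst :: "fm \<Rightarrow> tm \<Rightarrow> fm" where
  "inst p t = subst_fm (\<lambda>i. case i of 0 \<Rightarrow> t | Suc j \<Rightarrow> Var j) p"

definition lift_fm :: "fm \<Rightarrow> fm" where
  "lift_fm p = subst_fm (\<lambda>i. Var (Suc i)) p"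

definition Neg :: "fm \<Rightarrow> fm" where "Neg p = Imp p Bot"
definition Top :: fm where "Top = Imp Bot Bot"
definition And :: "fm \<Rightarrow> fm \<Rightarrow> fm" where "And p q = Neg (Imp p (Neg q))"
definition Ex :: "fm \<Rightarrow> fm" where "Ex p = Neg (All (Neg p))"
definition Conjs :: "fm list \<Rightarrow> fm" where "Conjs ps = foldr And ps Top"
definition Exs :: "nat \<Rightarrow> fm \<Rightarrow> fm" where "Exs k p = (Ex ^^ k) p"
definition Alls :: "nat \<Rightarrow> fm \<Rightarrow> fm" where "Alls k p = (All ^^ k) p"

inductive prov :: "lang \<Rightarrow> fm \<Rightarrow> bool" for L where
  ax1: "wf_fm L p \<Longrightarrow> wf_fm L q \<Longrightarrow> prov L (Imp p (Imp q p))"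
| ax2: "wf_fm L p \<Longrightarrow> wf_fm L q \<Longrightarrow> wf_fm L r \<Longrightarrow>
        prov L (Imp (Imp p (Imp q r)) (Imp (Imp p q) (Imp p r)))"
| ax3: "wf_fm L p \<Longrightarrow> prov L (Imp (Neg (Neg p)) p)"
| ax_inst: "wf_fm L p \<Longrightarrow> wf_tm L t \<Longrightarrow> prov L (Imp (All p) (inst p t))"
| ax_vac: "wf_fm L p \<Longrightarrow> prov L (Imp p (All (lift_fm p)))"
| ax_dist: "wf_fm L p \<Longrightarrow> wf_fm L q \<Longrightarrow> prov L (Imp (All (Imp p q)) (Imp (All p) (All q)))"
| ax_refl: "wf_tm L t \<Longrightarrow> prov L (Eq t t)"
| ax_leib: "wf_fm L p \<Longrightarrow> wf_tm L s \<Longrightarrow> wf_tm L t \<Longrightarrow>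
            prov L (Imp (Eq s t) (Imp (inst p s) (inst p t)))"
| mp: "prov L (Imp p q) \<Longrightarrow> prov L p \<Longrightarrow> prov L q"
| gen: "prov L p \<Longrightarrow> prov L (All p)"

type_synonym fo_theory = "lang \<times> fm set"

definition is_theory :: "fo_theory \<Rightarrow> bool" where
  "is_theory T \<longleftrightarrow> (\<forall>p\<in>snd T. sentence (fst T) p)"

definition thm_of :: "fo_theory \<Rightarrow> fm \<Rightarrow> bool" where
  "thm_of T p \<longleftrightarrow> (\<exists>axs. set axs \<subseteq> snd T \<and> prov (fst T) (foldr Imp axs p))"

definition consistent :: "fo_theory \<Rightarrow> bool" where
  "consistent T \<longleftrightarrow> \<not> thm_of T Bot"

definition complete :: "fo_theory \<Rightarrow> bool" where
  "complete T \<longleftrightarrow> (\<forall>p. sentence (fst T) p \<longrightarrow> thm_of T p \<or> thm_of T (Neg p))"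

fun enc_tm :: "tm \<Rightarrow> nat" where
  "enc_tm (Var i) = prod_encode (0, i)"
| "enc_tm (Fn f ts) = prod_encode (1, prod_encode (f, list_encode (map enc_tm ts)))"

fun enc_fm :: "fm \<Rightarrow> nat" where
  "enc_fm Bot = prod_encode (0, 0)"
| "enc_fm (Eq s t) = prod_encode (1, prod_encode (enc_tm s, enc_tm t))"
| "enc_fm (Rel r ts) = prod_encode (2, prod_encode (r, list_encode (map enc_tm ts)))"
| "enc_fm (Imp p q) = prod_encode (3, prod_encode (enc_fm p, enc_fm q))"
| "enc_fm (All p) = prod_encode (4, enc_fm p)"

definition recursive_lang :: "lang \<Rightarrow> bool" where
  "recursive_lang L \<longleftrightarrow>
     recursive_set {prod_encode (f, k) | f k. fst L f = Some k} \<and>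
     recursive_set {prod_encode (r, k) | r k. snd L r = Some k}"

definition rec_axiomatizable :: "fo_theory \<Rightarrow> bool" where
  "rec_axiomatizable T \<longleftrightarrow> recursive_lang (fst T) \<and>
     (\<exists>Ax. (\<forall>p\<in>Ax. sentence (fst T) p) \<and> recursive_set (enc_fm ` Ax) \<and>
          (\<forall>p. sentence (fst T) p \<longrightarrow> (thm_of (fst T, Ax) p \<longleftrightarrow> thm_of T p)))"

text \<open>An interpretation data (Dm, F, R) for a source language into a target language:
  Dm: domain formula, free variable Var 0;
  F f: for a function symbol f of arity k, a formula with Var 0 = value, Var i = i-th argument (1 \<le> i \<le> k);
  R r: for a relation symbol r of arity k, a formula with Var (i-1) = i-th argument.
  Equality is translated as equality.\<close>
type_synonym interp = "fm \<times> (nat \<Rightarrow> fm) \<times> (nat \<Rightarrow> fm)"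

text \<open>Combining translated arguments phis (each with Var 0 = value, Var (m+1) = original variable m)
  under k = length phis existential quantifiers; the j-th witness is Var j; the outer context
  has off extra variables before the original ones; psi is the final (already shifted) formula.\<close>
definition combine :: "fm \<Rightarrow> nat \<Rightarrow> fm list \<Rightarrow> fm \<Rightarrow> fm" where
  "combine Dm off phis psi =
     (let k = length phis in
      Exs k (Conjs (map (\<lambda>j. subst_fm (\<lambda>i. Var j) Dm) [0..<k] @
                    map (\<lambda>j. subst_fm (\<lambda>m. if m = 0 then Var j else Var (k + off + m - 1)) (phis ! j)) [0..<k] @
                    [psi])))"

text \<open>tr_tm I t: formula with Var 0 = value of t, Var (m+1) = variable m of t.\<close>
fun tr_tm :: "interp \<Rightarrow> tm \<Rightarrow> fm" where
  "tr_tm I (Var i) = Eq (Var 0) (Var (Suc i))"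
| "tr_tm I (Fn f ts) =
     (let k = length ts; (Dm, F, R) = I in
      combine Dm 1 (map (tr_tm I) ts)
        (subst_fm (\<lambda>i. if i = 0 then Var k else if i \<le> k then Var (i - 1) else Var (k + i)) (F f)))"

fun tr_fm :: "interp \<Rightarrow> fm \<Rightarrow> fm" where
  "tr_fm I Bot = Bot"
| "tr_fm I (Eq s t) = combine (fst I) 0 [tr_tm I s, tr_tm I t] (Eq (Var 0) (Var 1))"
| "tr_fm I (Rel r ts) =
     (let k = length ts in
      combine (fst I) 0 (map (tr_tm I) ts)
        (subst_fm (\<lambda>i. if i < k then Var i else Var (k + i)) (snd (snd I) r)))"
| "tr_fm I (Imp p q) = Imp (tr_fm I p) (tr_fm I q)"
| "tr_fm I (All p) = All (Imp (fst I) (tr_fm I p))"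

definition is_interpretation :: "interp \<Rightarrow> fo_theory \<Rightarrow> fo_theory \<Rightarrow> bool" where
  "is_interpretation I T S \<longleftrightarrow>
    (let (Dm, F, R) = I; LT = fst T; LS = fst S in
     wf_fm LS Dm \<and> fv_fm Dm \<subseteq> {0} \<and>
     (\<forall>f k. fst LT f = Some k \<longrightarrow> wf_fm LS (F f) \<and> fv_fm (F f) \<subseteq> {0..k}) \<and>
     (\<forall>r k. snd LT r = Some k \<longrightarrow> wf_fm LS (R r) \<and> fv_fm (R r) \<subseteq> {..<k}) \<and>
     thm_of S (Ex Dm) \<and>
     (\<forall>f k. fst LT f = Some k \<longrightarrow>
        thm_of S (Alls k (Imp (Conjs (map (\<lambda>j. subst_fm (\<lambda>i. Var j) Dm) [0..<k]))
                         (Ex (And Dm (F f))))) \<and>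
        thm_of S (Alls k (Imp (Conjs (map (\<lambda>j. subst_fm (\<lambda>i. Var j) Dm) [0..<k]))
                 (All (All (Imp (Conjs [subst_fm (\<lambda>i. Var 0) Dm, subst_fm (\<lambda>i. Var 1) Dm,
                                         subst_fm (\<lambda>i. if i = 0 then Var 1 else Var (Suc i)) (F f),
                                         subst_fm (\<lambda>i. if i = 0 then Var 0 else Var (Suc i)) (F f)])
                                (Eq (Var 0) (Var 1)))))))) \<and>
     (\<forall>p\<in>snd T. thm_of S (tr_fm I p)))"

definition interpretable :: "fo_theory \<Rightarrow> fo_theory \<Rightarrow> bool" where
  "interpretable T S \<longleftrightarrow> (\<exists>I. is_interpretation I T S)"

definition G1 :: "fo_theory \<Rightarrow> bool" where
  "G1 T \<longleftrightarrow> (\<forall>S. is_theory S \<and> rec_axiomatizable S \<and> consistent S \<and> interpretable T S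
                  \<longrightarrow> \<not> complete S)"

text \<open>Language {0, S, P}: function symbol 0 = constant zero, function symbol 1 = successor S,
  relation symbol 0 = unary predicate P.\<close>
definition L_U :: lang where
  "L_U = ((\<lambda>f. if f = 0 then Some 0 else if f = 1 then Some 1 else None),
          (\<lambda>r. if r = 0 then Some 1 else None))"

fun numeral_tm :: "nat \<Rightarrow> tm" where
  "numeral_tm 0 = Fn 0 []"
| "numeral_tm (Suc n) = Fn 1 [numeral_tm n]"

definition U_theory :: "nat set \<Rightarrow> nat set \<Rightarrow> fo_theory" where
  "U_theory A B = (L_U,
     {Neg (Eq (numeral_tm m) (numeral_tm n)) | m n. m \<noteq> n} \<union>
     {Rel 0 [numeral_tm n] | n. n \<in> A} \<union>
     {Neg (Rel 0 [numeral_tm n]) | n. n \<in> B})"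

end

theory Submission
  imports Defs
begin


definition cf :: "nat \<Rightarrow> (nat list \<Rightarrow> nat) \<Rightarrow> bool" where
  "cf n f \<longleftrightarrow> (\<exists>g. recfn n g \<and> (\<forall>xs. length xs = n \<longrightarrow> g xs = f xs))"

lemma len_Suc2: "length xs = Suc (Suc n) \<Longrightarrow> (\<exists>a b ys. xs = a # b # ys \<and> length ys = n)"
  by (cases xs; cases "tl xs") auto

lemma len_Suc1: "length xs = Suc n \<Longrightarrow> (\<exists>a ys. xs = a # ys \<and> length ys = n)"
  by (cases xs) auto

lemma recfn_cf: "recfn n f \<Longrightarrow> cf n f"
  unfolding cf_def by blast

lemma cf_cong: "cf n f \<Longrightarrow> (\<And>xs. length xs = n \<Longrightarrow> f xs = g xs) \<Longrightarrow> cf n g"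
  unfolding cf_def by metis

lemma cf_const: "cf n (\<lambda>xs. c)"
proof (induction c)
  case 0
  then show ?case using rf_zero recfn_cf by blast
next
  case (Suc c)
  then obtain g where g: "recfn n g" "\<forall>xs. length xs = n \<longrightarrow> g xs = c" unfolding cf_def by blast
  have "recfn n (\<lambda>xs. (\<lambda>ys. Suc (hd ys)) (map (\<lambda>h. h xs) [g]))"
    by (rule rf_comp) (use g rf_succ in auto)
  then show ?case unfolding cf_def using g by (intro exI[of _ "(\<lambda>xs. (\<lambda>ys. Suc (hd ys)) (map (\<lambda>h. h xs) [g]))"]) auto
qed

lemma cf_proj: "i < n \<Longrightarrow> cf n (\<lambda>xs. xs ! i)"
  using rf_proj recfn_cf by blast

lemma cf_comp_aux:
  assumes "\<forall>h\<in>set hs. cf n h"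
  shows "\<exists>hs'. length hs' = length hs \<and> (\<forall>h\<in>set hs'. recfn n h) \<and>
     (\<forall>xs. length xs = n \<longrightarrow> map (\<lambda>h. h xs) hs' = map (\<lambda>h. h xs) hs)"
  using assms
proof (induction hs)
  case Nil
  then show ?case by auto
next
  case (Cons h hs)
  then obtain hs' where hs': "length hs' = length hs" "\<forall>h\<in>set hs'. recfn n h"
     "\<forall>xs. length xs = n \<longrightarrow> map (\<lambda>h. h xs) hs' = map (\<lambda>h. h xs) hs" by auto
  from Cons.prems obtain g where g: "recfn n g" "\<forall>xs. length xs = n \<longrightarrow> g xs = h xs"
    unfolding cf_def by auto
  show ?case using hs' g by (intro exI[of _ "g # hs'"]) auto
qed

lemma cf_comp:
  assumes "cf m g" "length hs = m" "\<forall>h\<in>set hs. cf n h"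
  shows "cf n (\<lambda>xs. g (map (\<lambda>h. h xs) hs))"
proof -
  obtain hs' where hs': "length hs' = length hs" "\<forall>h\<in>set hs'. recfn n h"
     "\<forall>xs. length xs = n \<longrightarrow> map (\<lambda>h. h xs) hs' = map (\<lambda>h. h xs) hs"
    using cf_comp_aux[OF assms(3)] by blast
  obtain g' where g': "recfn m g'" "\<forall>xs. length xs = m \<longrightarrow> g' xs = g xs"
    using assms(1) unfolding cf_def by auto
  have "recfn n (\<lambda>xs. g' (map (\<lambda>h. h xs) hs'))"
    using rf_comp[OF g'(1)] hs' assms(2) by auto
  moreover have "\<forall>xs. length xs = n \<longrightarrow> g' (map (\<lambda>h. h xs) hs') = g (map (\<lambda>h. h xs) hs)"
  proof (intro allI impI)
    fix xs :: "nat list" assume xs: "length xs = n"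
    then have "map (\<lambda>h. h xs) hs' = map (\<lambda>h. h xs) hs" using hs' by auto
    moreover have "length (map (\<lambda>h. h xs) hs) = m" using assms(2) by simp
    ultimately show "g' (map (\<lambda>h. h xs) hs') = g (map (\<lambda>h. h xs) hs)" using g' by simp
  qed
  ultimately show ?thesis unfolding cf_def by blast
qed

lemma cf_comp1: "cf 1 g \<Longrightarrow> cf n f \<Longrightarrow> cf n (\<lambda>xs. g [f xs])"
  using cf_comp[of 1 g "[f]" n] by simp

lemma cf_comp2: "cf 2 g \<Longrightarrow> cf n f1 \<Longrightarrow> cf n f2 \<Longrightarrow> cf n (\<lambda>xs. g [f1 xs, f2 xs])"
  using cf_comp[of 2 g "[f1, f2]" n] by simp

lemma cf_Suc: "cf n f \<Longrightarrow> cf n (\<lambda>xs. Suc (f xs))"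
  using cf_comp1[OF recfn_cf[OF rf_succ]] by simp

lemma cf_prec0:
  assumes "cf n g" "cf (Suc (Suc n)) h"
  shows "cf (Suc n) (\<lambda>xs. rec_nat (g (tl xs)) (\<lambda>y r. h (r # y # tl xs)) (hd xs))"
proof -
  obtain g' where g': "recfn n g'" "\<forall>xs. length xs = n \<longrightarrow> g' xs = g xs"
    using assms(1) unfolding cf_def by auto
  obtain h' where h': "recfn (Suc (Suc n)) h'" "\<forall>xs. length xs = Suc (Suc n) \<longrightarrow> h' xs = h xs"
    using assms(2) unfolding cf_def by auto
  have "recfn (Suc n) (\<lambda>xs. rec_nat (g' (tl xs)) (\<lambda>y r. h' (r # y # tl xs)) (hd xs))"
    by (rule rf_prec[OF g'(1) h'(1)])
  moreover have "rec_nat (g' (tl xs)) (\<lambda>y r. h' (r # y # tl xs)) (hd xs) =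
     rec_nat (g (tl xs)) (\<lambda>y r. h (r # y # tl xs)) (hd xs)" if "length xs = Suc n" for xs
  proof -
    have "g' (tl xs) = g (tl xs)" using g' that by simp
    moreover have "(\<lambda>y r. h' (r # y # tl xs)) = (\<lambda>y r. h (r # y # tl xs))"
      using h' that by auto
    ultimately show ?thesis by simp
  qed
  ultimately show ?thesis unfolding cf_def by blast
qed

lemma map_nth_upt: "length xs = n \<Longrightarrow> map (\<lambda>i. xs ! i) [0..<n] = xs"
  using map_nth[of xs] by simp

lemma cf_proj_all: "\<forall>h\<in>set (map (\<lambda>i xs. xs ! i) [0..<n]). cf n h"
  using cf_proj by auto

lemma cf_prec:
  assumes "cf n g" "cf (Suc (Suc n)) h" "cf n a"
  shows "cf n (\<lambda>xs. rec_nat (g xs) (\<lambda>y r. h (r # y # xs)) (a xs))"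
proof -
  let ?P = "(\<lambda>xs. rec_nat (g (tl xs)) (\<lambda>y r. h (r # y # tl xs)) (hd xs))"
  have "cf n (\<lambda>xs. ?P (map (\<lambda>h. h xs) (a # map (\<lambda>i xs. xs ! i) [0..<n])))"
    by (rule cf_comp[OF cf_prec0[OF assms(1,2)]]) (use assms(3) cf_proj_all in auto)
  then show ?thesis
    by (rule cf_cong) (simp add: comp_def map_nth_upt)
qed

lemma cf_mu:
  assumes "cf (Suc n) g" "\<forall>xs. length xs = n \<longrightarrow> (\<exists>y. g (y # xs) = 0)"
  shows "cf n (\<lambda>xs. LEAST y. g (y # xs) = 0)"
proof -
  obtain g' where g': "recfn (Suc n) g'" "\<forall>xs. length xs = Suc n \<longrightarrow> g' xs = g xs"
    using assms(1) unfolding cf_def by auto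
  have eq: "g' (y # xs) = g (y # xs)" if "length xs = n" for xs y
    using g'(2) that by simp
  have "recfn n (\<lambda>xs. LEAST y. g' (y # xs) = 0)"
  proof (rule rf_mu[OF g'(1)], intro allI impI)
    fix xs :: "nat list" assume "length xs = n"
    then show "\<exists>y. g' (y # xs) = 0" using assms(2) eq by simp
  qed
  moreover have "\<forall>xs. length xs = n \<longrightarrow> (LEAST y. g' (y # xs) = 0) = (LEAST y. g (y # xs) = 0)"
    using eq by simp
  ultimately show ?thesis unfolding cf_def by blast
qed

lemma cf_drop: "cf n f \<Longrightarrow> cf (k + n) (\<lambda>ys. f (drop k ys))"
proof -
  assume f: "cf n f"
  have "cf (k + n) (\<lambda>ys. f (map (\<lambda>h. h ys) (map (\<lambda>i ys. ys ! (k + i)) [0..<n])))"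
    by (rule cf_comp[OF f]) (auto intro: cf_proj)
  moreover have eq: "map (\<lambda>i. ys ! (k + i)) [0..<n] = drop k ys" if "length ys = k + n" for ys
    by (rule nth_equalityI) (use that in auto)
  ultimately show ?thesis
    by (elim cf_cong) (simp only: map_map comp_def eq)
qed

lemma cf_tl: "cf n f \<Longrightarrow> cf (Suc n) (\<lambda>ys. f (tl ys))"
  using cf_drop[of n f 1] by (simp add: drop_Suc)

lemma cf_hd: "cf (Suc n) (\<lambda>ys. hd ys)"
  by (rule cf_cong[OF cf_proj[of 0]]) (auto dest!: len_Suc1)

subsection \<open>Arithmetic\<close>

lemma cf_add: "cf n f \<Longrightarrow> cf n g \<Longrightarrow> cf n (\<lambda>xs. f xs + g xs)"
proof -
  assume f: "cf n f" and g: "cf n g"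
  have "cf n (\<lambda>xs. rec_nat (f xs) (\<lambda>y r. (\<lambda>ys. Suc (ys ! 0)) (r # y # xs)) (g xs))"
    by (rule cf_prec[OF f _ g]) (rule cf_Suc, rule cf_proj, simp)
  moreover have "rec_nat a (\<lambda>y r. Suc r) b = a + b" for a b :: nat
    by (induction b) auto
  ultimately show ?thesis by simp
qed

lemma cf_pred: "cf n f \<Longrightarrow> cf n (\<lambda>xs. f xs - 1)"
proof -
  assume f: "cf n f"
  have "cf n (\<lambda>xs. rec_nat 0 (\<lambda>y r. (\<lambda>ys. ys ! 1) (r # y # xs)) (f xs))"
    by (rule cf_prec[OF cf_const _ f]) (rule cf_proj, simp)
  moreover have "rec_nat 0 (\<lambda>y r. y) b = b - 1" for b :: nat
    by (induction b) auto
  ultimately show ?thesis by simp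
qed

lemma cf_sub: "cf n f \<Longrightarrow> cf n g \<Longrightarrow> cf n (\<lambda>xs. f xs - g xs)"
proof -
  assume f: "cf n f" and g: "cf n g"
  have "cf n (\<lambda>xs. rec_nat (f xs) (\<lambda>y r. (\<lambda>ys. ys ! 0 - 1) (r # y # xs)) (g xs))"
    by (rule cf_prec[OF f _ g]) (rule cf_pred, rule cf_proj, simp)
  moreover have "rec_nat a (\<lambda>y r. r - 1) b = a - b" for a b :: nat
    by (induction b) auto
  ultimately show ?thesis by simp
qed

lemma cf_mult: "cf n f \<Longrightarrow> cf n g \<Longrightarrow> cf n (\<lambda>xs. f xs * g xs)"
proof -
  assume f: "cf n f" and g: "cf n g"
  have f2: "cf (2 + n) (\<lambda>ys. f (drop 2 ys))" by (rule cf_drop[OF f])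
  have "cf n (\<lambda>xs. rec_nat 0 (\<lambda>y r. (\<lambda>ys. ys ! 0 + f (drop 2 ys)) (r # y # xs)) (g xs))"
    by (rule cf_prec[OF cf_const _ g]) (rule cf_add, rule cf_proj, simp, use f2 in simp)
  moreover have "rec_nat 0 (\<lambda>y r. r + a) b = a * b" for a b :: nat
    by (induction b) auto
  ultimately show ?thesis by (simp add: mult.commute)
qed

definition rpred :: "nat \<Rightarrow> (nat list \<Rightarrow> bool) \<Rightarrow> bool" where
  "rpred n P \<longleftrightarrow> cf n (\<lambda>xs. if P xs then 1 else 0)"

lemma rpred_cong: "rpred n P \<Longrightarrow> (\<And>xs. length xs = n \<Longrightarrow> P xs = Q xs) \<Longrightarrow> rpred n Q"
  unfolding rpred_def by (erule cf_cong) simp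

lemma rpred_const: "rpred n (\<lambda>xs. b)"
  unfolding rpred_def by (rule cf_const)

lemma rpred_not: "rpred n P \<Longrightarrow> rpred n (\<lambda>xs. \<not> P xs)"
  unfolding rpred_def by (drule cf_sub[OF cf_const[of n 1]]) (erule cf_cong, simp)

lemma rpred_and: "rpred n P \<Longrightarrow> rpred n Q \<Longrightarrow> rpred n (\<lambda>xs. P xs \<and> Q xs)"
  unfolding rpred_def by (drule (1) cf_mult) (erule cf_cong, simp)

lemma rpred_or: "rpred n P \<Longrightarrow> rpred n Q \<Longrightarrow> rpred n (\<lambda>xs. P xs \<or> Q xs)"
proof -
  assume "rpred n P" "rpred n Q"
  then have "rpred n (\<lambda>xs. \<not> (\<not> P xs \<and> \<not> Q xs))"
    by (intro rpred_not rpred_and)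
  then show ?thesis by simp
qed

lemma rpred_imp: "rpred n P \<Longrightarrow> rpred n Q \<Longrightarrow> rpred n (\<lambda>xs. P xs \<longrightarrow> Q xs)"
proof -
  assume "rpred n P" "rpred n Q"
  then have "rpred n (\<lambda>xs. \<not> P xs \<or> Q xs)"
    by (intro rpred_not rpred_or)
  then show ?thesis by simp
qed

lemma rpred_le: "cf n f \<Longrightarrow> cf n g \<Longrightarrow> rpred n (\<lambda>xs. f xs \<le> g xs)"
  unfolding rpred_def by (drule (1) cf_sub, drule cf_sub[OF cf_const[of n 1]]) (erule cf_cong, simp)

lemma rpred_less: "cf n f \<Longrightarrow> cf n g \<Longrightarrow> rpred n (\<lambda>xs. f xs < g xs)"
proof -
  assume "cf n f" "cf n g"
  then have "rpred n (\<lambda>xs. \<not> g xs \<le> f xs)" by (intro rpred_not rpred_le)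
  then show ?thesis by (simp add: not_le)
qed

lemma rpred_eq: "cf n f \<Longrightarrow> cf n g \<Longrightarrow> rpred n (\<lambda>xs. f xs = g xs)"
proof -
  assume "cf n f" "cf n g"
  then have "rpred n (\<lambda>xs. f xs \<le> g xs \<and> g xs \<le> f xs)" by (intro rpred_and rpred_le)
  then show ?thesis by (rule rpred_cong) auto
qed

lemma cf_if: "rpred n P \<Longrightarrow> cf n f \<Longrightarrow> cf n g \<Longrightarrow> cf n (\<lambda>xs. if P xs then f xs else g xs)"
proof -
  assume P: "rpred n P" and f: "cf n f" and g: "cf n g"
  have "cf n (\<lambda>xs. (if P xs then 1 else 0) * f xs + (1 - (if P xs then 1 else 0)) * g xs)"
    using P f g unfolding rpred_def by (intro cf_add cf_mult cf_sub cf_const)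
  then show ?thesis by (rule cf_cong) simp
qed

lemma rpred_ex_less:
  assumes P: "rpred (Suc n) (\<lambda>ys. P (hd ys) (tl ys))" and b: "cf n b"
  shows "rpred n (\<lambda>xs. \<exists>y<b xs. P y xs)"
proof -
  have P2: "rpred (Suc (Suc n)) (\<lambda>ys. P (ys ! 1) (drop 2 ys))"
    using cf_tl[OF P[unfolded rpred_def]] unfolding rpred_def
    by (rule cf_cong) (auto dest!: len_Suc2)
  have "cf n (\<lambda>xs. rec_nat 0 (\<lambda>y r. (\<lambda>ys. if ys ! 0 = 1 \<or> P (ys ! 1) (drop 2 ys) then 1 else 0) (r # y # xs)) (b xs))"
    by (rule cf_prec[OF cf_const _ b]) (rule cf_if, rule rpred_or, rule rpred_eq, rule cf_proj,
        simp, rule cf_const, rule P2, rule cf_const, rule cf_const)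
  moreover have H: "rec_nat 0 (\<lambda>y r. if (r # y # xs) ! 0 = 1 \<or> P ((r # y # xs) ! 1) (drop 2 (r # y # xs)) then 1 else 0) m = (if \<exists>y<m. P y xs then 1 else 0)" for m xs
    by (induction m) (auto simp: less_Suc_eq)
  ultimately show ?thesis unfolding rpred_def by (elim cf_cong) (simp only: H)
qed

lemma rpred_all_less:
  assumes P: "rpred (Suc n) (\<lambda>ys. P (hd ys) (tl ys))" and b: "cf n b"
  shows "rpred n (\<lambda>xs. \<forall>y<b xs. P y xs)"
proof -
  have "rpred n (\<lambda>xs. \<not> (\<exists>y<b xs. \<not> P y xs))"
    by (rule rpred_not, rule rpred_ex_less[OF rpred_not[OF P] b])
  then show ?thesis by simp
qed

lemma rpred_mem: "recursive_set X \<Longrightarrow> cf n f \<Longrightarrow> rpred n (\<lambda>xs. f xs \<in> X)"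
  unfolding recursive_set_def rpred_def
  by (elim exE conjE, drule recfn_cf, drule (1) cf_comp1) simp

lemma cf_mu_pred:
  assumes "rpred (Suc n) P" "\<forall>xs. length xs = n \<longrightarrow> (\<exists>y. P (y # xs))"
  shows "cf n (\<lambda>xs. LEAST y. P (y # xs))"
proof -
  have "rpred (Suc n) (\<lambda>ys. \<not> P ys)" by (rule rpred_not[OF assms(1)])
  then have "cf n (\<lambda>xs. LEAST y. (if \<not> P (y # xs) then 1 else 0) = (0::nat))"
    unfolding rpred_def by (rule cf_mu) (use assms(2) in auto)
  then show ?thesis by (rule cf_cong) (rule arg_cong[where f=Least], auto)
qed

subsection \<open>Pairing\<close>

lemma cf_triangle: "cf n f \<Longrightarrow> cf n (\<lambda>xs. triangle (f xs))"
proof -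
  assume f: "cf n f"
  have "cf n (\<lambda>xs. rec_nat 0 (\<lambda>y r. (\<lambda>ys. ys ! 0 + Suc (ys ! 1)) (r # y # xs)) (f xs))"
    by (rule cf_prec[OF cf_const _ f]) (intro cf_add cf_Suc cf_proj; simp)
  moreover have "rec_nat 0 (\<lambda>y r. r + Suc y) b = triangle b" for b :: nat
    by (induction b) auto
  ultimately show ?thesis by simp
qed

lemma cf_pe: "cf n f \<Longrightarrow> cf n g \<Longrightarrow> cf n (\<lambda>xs. prod_encode (f xs, g xs))"
  unfolding prod_encode_def by (simp, intro cf_add cf_triangle)

definition pfst :: "nat \<Rightarrow> nat" where "pfst z = fst (prod_decode z)"
definition psnd :: "nat \<Rightarrow> nat" where "psnd z = snd (prod_decode z)"

lemma pfst_pe[simp]: "pfst (prod_encode (a, b)) = a" by (simp add: pfst_def)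
lemma psnd_pe[simp]: "psnd (prod_encode (a, b)) = b" by (simp add: psnd_def)
lemma pe_split: "prod_encode (pfst z, psnd z) = z" by (simp add: pfst_def psnd_def)

lemma pfst_least: "pfst z = (LEAST a. \<exists>b<Suc z. prod_encode (a, b) = z)"
proof (rule Least_equality[symmetric])
  show "\<exists>b<Suc z. prod_encode (pfst z, b) = z"
    using pe_split[of z] le_prod_encode_2[of "psnd z" "pfst z"] by (intro exI[of _ "psnd z"]) auto
next
  fix a assume "\<exists>b<Suc z. prod_encode (a, b) = z"
  then obtain b where "prod_encode (a, b) = z" by auto
  then show "pfst z \<le> a" by auto
qed

lemma psnd_least: "psnd z = (LEAST b. \<exists>a<Suc z. prod_encode (a, b) = z)"
proof (rule Least_equality[symmetric])
  show "\<exists>a<Suc z. prod_encode (a, psnd z) = z"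
    using pe_split[of z] le_prod_encode_1[of "pfst z" "psnd z"] by (intro exI[of _ "pfst z"]) auto
next
  fix b assume "\<exists>a<Suc z. prod_encode (a, b) = z"
  then obtain a where "prod_encode (a, b) = z" by auto
  then show "psnd z \<le> b" by auto
qed

lemma cf_pfst1: "cf 1 (\<lambda>xs. pfst (xs ! 0))"
proof -
  have E: "rpred (Suc (Suc 1)) (\<lambda>ys. prod_encode (ys ! 1, ys ! 0) = ys ! 2)"
    by (intro rpred_eq cf_pe cf_proj) auto
  have E2: "rpred (Suc (Suc 1)) (\<lambda>ys. prod_encode (tl ys ! 0, hd ys) = tl ys ! 1)"
    by (rule rpred_cong[OF E]) (auto dest!: len_Suc2)
  have P: "rpred (Suc 1) (\<lambda>ys. \<exists>b<Suc (ys ! 1). prod_encode (ys ! 0, b) = ys ! 1)"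
    by (rule rpred_ex_less[OF E2]) (intro cf_Suc cf_proj, simp)
  have ex: "\<forall>xs. length xs = 1 \<longrightarrow> (\<exists>y. \<exists>b<Suc ((y # xs) ! 1). prod_encode ((y # xs) ! 0, b) = (y # xs) ! 1)"
  proof (intro allI impI)
    fix xs :: "nat list"
    show "\<exists>y. \<exists>b<Suc ((y # xs) ! 1). prod_encode ((y # xs) ! 0, b) = (y # xs) ! 1"
      using pe_split[of "xs ! 0"] le_prod_encode_2[of "psnd (xs ! 0)" "pfst (xs ! 0)"]
      by (intro exI[of _ "pfst (xs ! 0)"] exI[of _ "psnd (xs ! 0)"]) auto
  qed
  have "cf 1 (\<lambda>xs. LEAST y. \<exists>b<Suc ((y # xs) ! 1). prod_encode ((y # xs) ! 0, b) = (y # xs) ! 1)"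
    by (rule cf_mu_pred[OF P ex])
  then show ?thesis
    by (rule cf_cong) (simp add: pfst_least)
qed

lemma cf_psnd1: "cf 1 (\<lambda>xs. psnd (xs ! 0))"
proof -
  have E: "rpred (Suc (Suc 1)) (\<lambda>ys. prod_encode (ys ! 0, ys ! 1) = ys ! 2)"
    by (intro rpred_eq cf_pe cf_proj) auto
  have E2: "rpred (Suc (Suc 1)) (\<lambda>ys. prod_encode (hd ys, tl ys ! 0) = tl ys ! 1)"
    by (rule rpred_cong[OF E]) (auto dest!: len_Suc2)
  have P: "rpred (Suc 1) (\<lambda>ys. \<exists>a<Suc (ys ! 1). prod_encode (a, ys ! 0) = ys ! 1)"
    by (rule rpred_ex_less[OF E2]) (intro cf_Suc cf_proj, simp)
  have ex: "\<forall>xs. length xs = 1 \<longrightarrow> (\<exists>y. \<exists>a<Suc ((y # xs) ! 1). prod_encode (a, (y # xs) ! 0) = (y # xs) ! 1)"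
  proof (intro allI impI)
    fix xs :: "nat list"
    show "\<exists>y. \<exists>a<Suc ((y # xs) ! 1). prod_encode (a, (y # xs) ! 0) = (y # xs) ! 1"
      using pe_split[of "xs ! 0"] le_prod_encode_1[of "pfst (xs ! 0)" "psnd (xs ! 0)"]
      by (intro exI[of _ "psnd (xs ! 0)"] exI[of _ "pfst (xs ! 0)"]) auto
  qed
  have "cf 1 (\<lambda>xs. LEAST y. \<exists>a<Suc ((y # xs) ! 1). prod_encode (a, (y # xs) ! 0) = (y # xs) ! 1)"
    by (rule cf_mu_pred[OF P ex])
  then show ?thesis
    by (rule cf_cong) (simp add: psnd_least)
qed

lemma cf_pfst: "cf n f \<Longrightarrow> cf n (\<lambda>xs. pfst (f xs))"
  using cf_comp1[OF cf_pfst1] by simp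

lemma cf_psnd: "cf n f \<Longrightarrow> cf n (\<lambda>xs. psnd (f xs))"
  using cf_comp1[OF cf_psnd1] by simp


subsection \<open>List codes\<close>

definition tlc :: "nat \<Rightarrow> nat" where "tlc z = (if z = 0 then 0 else psnd (z - 1))"
definition hdc :: "nat \<Rightarrow> nat" where "hdc z = (if z = 0 then 0 else pfst (z - 1))"
definition nthc :: "nat \<Rightarrow> nat \<Rightarrow> nat" where "nthc z k = hdc ((tlc ^^ k) z)"

lemma tlc_0[simp]: "tlc 0 = 0" and hdc_0[simp]: "hdc 0 = 0"
  by (simp_all add: tlc_def hdc_def)

lemma tlc_Cons[simp]: "tlc (Suc (prod_encode (x, y))) = y"
  and hdc_Cons[simp]: "hdc (Suc (prod_encode (x, y))) = x"
  by (simp_all add: tlc_def hdc_def)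

lemma nthc_0_code[simp]: "nthc 0 k = 0"
proof -
  have "(tlc ^^ k) 0 = 0" by (induction k) auto
  then show ?thesis by (simp add: nthc_def)
qed

lemma nthc_Suc: "nthc z (Suc k) = nthc (tlc z) k"
  unfolding nthc_def funpow_Suc_right by simp

lemma nthc_list: "nthc (list_encode xs) k = (if k < length xs then xs ! k else 0)"
proof (induction xs arbitrary: k)
  case Nil
  then show ?case by simp
next
  case (Cons x xs)
  then show ?case
    by (cases k) (auto simp: nthc_Suc, simp add: nthc_def)
qed

lemma length_le_list_encode: "length xs \<le> list_encode xs"
  by (induction xs) (auto intro: order_trans[OF _ le_prod_encode_2])

lemma nthc_ge: "z \<le> k \<Longrightarrow> nthc z k = 0"
proof -
  assume "z \<le> k"
  moreover have "length (list_decode z) \<le> z"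
    using length_le_list_encode[of "list_decode z"] by simp
  ultimately show ?thesis
    using nthc_list[of "list_decode z" k] by simp
qed

lemma pfst_0[simp]: "pfst 0 = 0" and psnd_0[simp]: "psnd 0 = 0"
  using pfst_pe[of 0 0] psnd_pe[of 0 0] by (simp_all add: prod_encode_def)

lemma cf_tlc: "cf n f \<Longrightarrow> cf n (\<lambda>xs. tlc (f xs))"
  unfolding tlc_def by (intro cf_if rpred_eq cf_const cf_psnd cf_pred)

lemma cf_hdc: "cf n f \<Longrightarrow> cf n (\<lambda>xs. hdc (f xs))"
  unfolding hdc_def by (intro cf_if rpred_eq cf_const cf_pfst cf_pred)

lemma cf_nthc: "cf n f \<Longrightarrow> cf n k \<Longrightarrow> cf n (\<lambda>xs. nthc (f xs) (k xs))"
proof -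
  assume f: "cf n f" and k: "cf n k"
  have "cf n (\<lambda>xs. rec_nat (f xs) (\<lambda>y r. tlc ((r # y # xs) ! 0)) (k xs))"
    by (rule cf_prec[OF f _ k]) (rule cf_tlc, rule cf_proj, simp)
  moreover have "rec_nat z (\<lambda>y r. tlc r) m = (tlc ^^ m) z" for z m
    by (induction m) auto
  ultimately have "cf n (\<lambda>xs. (tlc ^^ k xs) (f xs))" by simp
  then show ?thesis unfolding nthc_def by (rule cf_hdc)
qed

lemma rpred_ex_less':
  assumes "cf n b" "\<And>y xs. length xs = n \<Longrightarrow> Q (y # xs) = P y xs" "rpred m Q" "m = Suc n"
  shows "rpred n (\<lambda>xs. \<exists>y<b xs. P y xs)"
proof (rule rpred_ex_less[OF _ assms(1)])
  show "rpred (Suc n) (\<lambda>ys. P (hd ys) (tl ys))"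
    by (rule rpred_cong[OF assms(3)[unfolded assms(4)]]) (auto dest!: len_Suc1 simp: assms(2))
qed

lemma rpred_all_less':
  assumes "cf n b" "\<And>y xs. length xs = n \<Longrightarrow> Q (y # xs) = P y xs" "rpred m Q" "m = Suc n"
  shows "rpred n (\<lambda>xs. \<forall>y<b xs. P y xs)"
proof (rule rpred_all_less[OF _ assms(1)])
  show "rpred (Suc n) (\<lambda>ys. P (hd ys) (tl ys))"
    by (rule rpred_cong[OF assms(3)[unfolded assms(4)]]) (auto dest!: len_Suc1 simp: assms(2))
qed

lemma rpred_comp2: "rpred 2 (\<lambda>xs. P (xs ! 0) (xs ! 1)) \<Longrightarrow> cf n f \<Longrightarrow> cf n g \<Longrightarrow> rpred n (\<lambda>xs. P (f xs) (g xs))"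
  unfolding rpred_def by (drule (2) cf_comp2) simp

lemma rpred_comp1: "rpred 1 (\<lambda>xs. P (xs ! 0)) \<Longrightarrow> cf n f \<Longrightarrow> rpred n (\<lambda>xs. P (f xs))"
  unfolding rpred_def by (drule (1) cf_comp1) simp


inductive Dv :: "(nat \<Rightarrow> nat \<Rightarrow> bool) \<Rightarrow> nat \<Rightarrow> bool" for Rule where
  Dv0: "Dv Rule 0"
| Dvs: "(\<forall>k. Dv Rule (nthc P k)) \<Longrightarrow> Rule c P \<Longrightarrow> Dv Rule c"

definition Ent :: "(nat \<Rightarrow> nat \<Rightarrow> bool) \<Rightarrow> nat \<Rightarrow> nat \<Rightarrow> bool" where
  "Ent Rule l j \<longleftrightarrow> pfst (nthc l j) = 0 \<or>
     (Rule (pfst (nthc l j)) (psnd (nthc l j)) \<and>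
      (\<forall>k<psnd (nthc l j). nthc (psnd (nthc l j)) k = 0 \<or>
          (\<exists>i<j. pfst (nthc l i) = nthc (psnd (nthc l j)) k)))"

definition valid :: "(nat \<Rightarrow> nat \<Rightarrow> bool) \<Rightarrow> nat \<Rightarrow> bool" where
  "valid Rule l \<longleftrightarrow> (\<forall>j<l. Ent Rule l j)"

lemma valid_Dv:
  assumes "valid Rule l"
  shows "Dv Rule (pfst (nthc l j))"
proof (induction j rule: less_induct)
  case (less j)
  show ?case
  proof (cases "j < l")
    case False
    then show ?thesis by (simp add: nthc_ge Dv0)
  next
    case True
    then have E: "Ent Rule l j" using assms unfolding valid_def by blast
    show ?thesis
    proof (cases "pfst (nthc l j) = 0")
      case True
      then show ?thesis by (simp add: Dv0)
    next
      case False
      let ?P = "psnd (nthc l j)"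
      have R: "Rule (pfst (nthc l j)) ?P" and
        K: "\<forall>k<?P. nthc ?P k = 0 \<or> (\<exists>i<j. pfst (nthc l i) = nthc ?P k)"
        using E False unfolding Ent_def by auto
      have "Dv Rule (nthc ?P k)" for k
      proof (cases "k < ?P")
        case True
        then show ?thesis using K less.IH by (metis Dv0)
      next
        case False
        then show ?thesis by (simp add: nthc_ge Dv0)
      qed
      then show ?thesis using Dvs R by blast
    qed
  qed
qed

definition goodL :: "(nat \<Rightarrow> nat \<Rightarrow> bool) \<Rightarrow> nat list \<Rightarrow> bool" where
  "goodL Rule es \<longleftrightarrow> (\<forall>j<length es. pfst (es ! j) = 0 \<or>
     (Rule (pfst (es ! j)) (psnd (es ! j)) \<and>
      (\<forall>k<psnd (es ! j). nthc (psnd (es ! j)) k = 0 \<or>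
          (\<exists>i<j. pfst (es ! i) = nthc (psnd (es ! j)) k))))"

lemma goodL_valid: "goodL Rule es \<Longrightarrow> valid Rule (list_encode es)"
  unfolding valid_def
proof (intro allI impI)
  fix j assume G: "goodL Rule es" and j: "j < list_encode es"
  show "Ent Rule (list_encode es) j"
  proof (cases "j < length es")
    case False
    then show ?thesis unfolding Ent_def by (simp add: nthc_list)
  next
    case True
    have e: "nthc (list_encode es) i = es ! i" if "i \<le> j" for i
      using that True by (simp add: nthc_list)
    have "pfst (es ! j) = 0 \<or>
     (Rule (pfst (es ! j)) (psnd (es ! j)) \<and>
      (\<forall>k<psnd (es ! j). nthc (psnd (es ! j)) k = 0 \<or>
          (\<exists>i<j. pfst (es ! i) = nthc (psnd (es ! j)) k)))"
      using G True unfolding goodL_def by blast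
    then show ?thesis unfolding Ent_def using e by (simp add: e[OF order_refl]) (metis e less_imp_le)
  qed
qed

lemma goodL_Nil: "goodL Rule []"
  by (simp add: goodL_def)

lemma goodL_append:
  assumes "goodL Rule es1" "goodL Rule es2"
  shows "goodL Rule (es1 @ es2)"
  unfolding goodL_def
proof (intro allI impI)
  fix j assume j: "j < length (es1 @ es2)"
  show "pfst ((es1 @ es2) ! j) = 0 \<or>
     (Rule (pfst ((es1 @ es2) ! j)) (psnd ((es1 @ es2) ! j)) \<and>
      (\<forall>k<psnd ((es1 @ es2) ! j). nthc (psnd ((es1 @ es2) ! j)) k = 0 \<or>
          (\<exists>i<j. pfst ((es1 @ es2) ! i) = nthc (psnd ((es1 @ es2) ! j)) k)))"
  proof (cases "j < length es1")
    case True
    have e: "(es1 @ es2) ! i = es1 ! i" if "i \<le> j" for i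
      using that True by (simp add: nth_append)
    have "pfst (es1 ! j) = 0 \<or>
     (Rule (pfst (es1 ! j)) (psnd (es1 ! j)) \<and>
      (\<forall>k<psnd (es1 ! j). nthc (psnd (es1 ! j)) k = 0 \<or>
          (\<exists>i<j. pfst (es1 ! i) = nthc (psnd (es1 ! j)) k)))"
      using assms(1) True unfolding goodL_def by blast
    then show ?thesis using e by (simp add: e[OF order_refl]) (metis e less_imp_le)
  next
    case False
    define j' where "j' = j - length es1"
    have jj: "j = length es1 + j'" "j' < length es2" using False j unfolding j'_def by auto
    have G: "pfst (es2 ! j') = 0 \<or>
     (Rule (pfst (es2 ! j')) (psnd (es2 ! j')) \<and>
      (\<forall>k<psnd (es2 ! j'). nthc (psnd (es2 ! j')) k = 0 \<or>
          (\<exists>i<j'. pfst (es2 ! i) = nthc (psnd (es2 ! j')) k)))"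
      using assms(2) jj(2) unfolding goodL_def by blast
    have e: "(es1 @ es2) ! j = es2 ! j'" using jj by (simp add: nth_append)
    have sh: "\<exists>i<j. pfst ((es1 @ es2) ! i) = v" if "\<exists>i<j'. pfst (es2 ! i) = v" for v
    proof -
      from that obtain i where "i < j'" "pfst (es2 ! i) = v" by blast
      then show ?thesis using jj by (intro exI[of _ "length es1 + i"]) (auto simp: nth_append)
    qed
    show ?thesis unfolding e using G sh by blast
  qed
qed

lemma goodL_snoc:
  assumes "goodL Rule es" "Rule c P" "\<forall>k<P. nthc P k = 0 \<or> (\<exists>i<length es. pfst (es ! i) = nthc P k)"
  shows "goodL Rule (es @ [prod_encode (c, P)])"
  unfolding goodL_def
proof (intro allI impI)
  fix j assume j: "j < length (es @ [prod_encode (c, P)])"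
  show "pfst ((es @ [prod_encode (c, P)]) ! j) = 0 \<or>
     (Rule (pfst ((es @ [prod_encode (c, P)]) ! j)) (psnd ((es @ [prod_encode (c, P)]) ! j)) \<and>
      (\<forall>k<psnd ((es @ [prod_encode (c, P)]) ! j). nthc (psnd ((es @ [prod_encode (c, P)]) ! j)) k = 0 \<or>
          (\<exists>i<j. pfst ((es @ [prod_encode (c, P)]) ! i) = nthc (psnd ((es @ [prod_encode (c, P)]) ! j)) k)))"
  proof (cases "j < length es")
    case True
    have e: "(es @ [prod_encode (c, P)]) ! i = es ! i" if "i \<le> j" for i
      using that True by (simp add: nth_append)
    have "pfst (es ! j) = 0 \<or>
     (Rule (pfst (es ! j)) (psnd (es ! j)) \<and>
      (\<forall>k<psnd (es ! j). nthc (psnd (es ! j)) k = 0 \<or>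
          (\<exists>i<j. pfst (es ! i) = nthc (psnd (es ! j)) k)))"
      using assms(1) True unfolding goodL_def by blast
    then show ?thesis using e by (simp add: e[OF order_refl]) (metis e less_imp_le)
  next
    case False
    then have "j = length es" using j by simp
    then show ?thesis using assms(2,3) by (auto simp: nth_append)
  qed
qed

lemma Dv_goodL:
  assumes "Dv Rule c"
  shows "\<exists>es. goodL Rule es \<and> (\<exists>j<length es. pfst (es ! j) = c)"
  using assms
proof (induction rule: Dv.induct)
  case Dv0
  show ?case by (intro exI[of _ "[0]"]) (auto simp: goodL_def)
next
  case (Dvs P c)
  have all: "\<exists>es. goodL Rule es \<and> (\<forall>k<m. nthc P k = 0 \<or> (\<exists>i<length es. pfst (es ! i) = nthc P k))" for m
  proof (induction m)
    case 0
    then show ?case using goodL_Nil by blast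
  next
    case (Suc m)
    then obtain es where es: "goodL Rule es" "\<forall>k<m. nthc P k = 0 \<or> (\<exists>i<length es. pfst (es ! i) = nthc P k)"
      by blast
    obtain es' where es': "goodL Rule es'" "\<exists>j<length es'. pfst (es' ! j) = nthc P m"
      using Dvs.IH by blast
    have "goodL Rule (es @ es')" by (rule goodL_append[OF es(1) es'(1)])
    moreover have "\<forall>k<Suc m. nthc P k = 0 \<or> (\<exists>i<length (es @ es'). pfst ((es @ es') ! i) = nthc P k)"
    proof (intro allI impI)
      fix k assume "k < Suc m"
      then consider "k < m" | "k = m" by linarith
      then show "nthc P k = 0 \<or> (\<exists>i<length (es @ es'). pfst ((es @ es') ! i) = nthc P k)"
      proof cases
        case 1
        then show ?thesis using es(2) by (auto simp: nth_append)
      next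
        case 2
        from es'(2) obtain j where "j < length es'" "pfst (es' ! j) = nthc P m" by blast
        then show ?thesis using 2 by (intro disjI2 exI[of _ "length es + j"]) (auto simp: nth_append)
      qed
    qed
    ultimately show ?case by blast
  qed
  from all[of P] obtain es where es: "goodL Rule es" "\<forall>k<P. nthc P k = 0 \<or> (\<exists>i<length es. pfst (es ! i) = nthc P k)"
    by blast
  have "goodL Rule (es @ [prod_encode (c, P)])" by (rule goodL_snoc[OF es(1) \<open>Rule c P\<close> es(2)])
  then show ?case by (intro exI[of _ "es @ [prod_encode (c, P)]"]) auto
qed

lemma Dv_valid:
  assumes "Dv Rule c"
  shows "\<exists>l. valid Rule l \<and> (\<exists>j<l. pfst (nthc l j) = c)"
proof -
  obtain es where es: "goodL Rule es" "\<exists>j<length es. pfst (es ! j) = c"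
    using Dv_goodL[OF assms] by blast
  then obtain j where j: "j < length es" "pfst (es ! j) = c" by blast
  have "j < list_encode es" using j(1) length_le_list_encode[of es] by linarith
  then show ?thesis using goodL_valid[OF es(1)] j
    by (intro exI[of _ "list_encode es"]) (auto simp: nthc_list)
qed

lemma rpred_valid:
  assumes R: "rpred 2 (\<lambda>xs. Rule (xs ! 0) (xs ! 1))"
  shows "rpred 1 (\<lambda>xs. valid Rule (xs ! 0))"
proof -
  \<comment> \<open>ws = [i, k, j, l]\<close>
  have Q4: "rpred 4 (\<lambda>ws. pfst (nthc (ws ! 3) (ws ! 0)) = nthc (psnd (nthc (ws ! 3) (ws ! 2))) (ws ! 1))"
    by (intro rpred_eq cf_pfst cf_psnd cf_nthc cf_proj) auto
  \<comment> \<open>zs = [k, j, l]\<close>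
  have Q3: "rpred 3 (\<lambda>zs. nthc (psnd (nthc (zs ! 2) (zs ! 1))) (zs ! 0) = 0 \<or>
       (\<exists>i<zs ! 1. pfst (nthc (zs ! 2) i) = nthc (psnd (nthc (zs ! 2) (zs ! 1))) (zs ! 0)))"
  proof (rule rpred_or)
    show "rpred 3 (\<lambda>zs. nthc (psnd (nthc (zs ! 2) (zs ! 1))) (zs ! 0) = 0)"
      by (intro rpred_eq cf_pfst cf_psnd cf_nthc cf_proj cf_const) auto
    show "rpred 3 (\<lambda>zs. \<exists>i<zs ! 1. pfst (nthc (zs ! 2) i) = nthc (psnd (nthc (zs ! 2) (zs ! 1))) (zs ! 0))"
      by (rule rpred_ex_less'[OF _ _ Q4]) (auto intro!: cf_proj cf_psnd cf_nthc simp: numeral_eq_Suc)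
  qed
  \<comment> \<open>ys = [j, l]\<close>
  have RR: "rpred 2 (\<lambda>ys. Rule (pfst (nthc (ys ! 1) (ys ! 0))) (psnd (nthc (ys ! 1) (ys ! 0))))"
    by (rule rpred_comp2[OF R]) (intro cf_pfst cf_psnd cf_nthc cf_proj; simp)+
  have Q2: "rpred 2 (\<lambda>ys. Ent Rule (ys ! 1) (ys ! 0))"
    unfolding Ent_def
  proof (intro rpred_or rpred_and)
    show "rpred 2 (\<lambda>ys. pfst (nthc (ys ! 1) (ys ! 0)) = 0)"
      by (intro rpred_eq cf_pfst cf_psnd cf_nthc cf_proj cf_const) auto
    show "rpred 2 (\<lambda>ys. Rule (pfst (nthc (ys ! 1) (ys ! 0))) (psnd (nthc (ys ! 1) (ys ! 0))))"
      by (rule RR)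
    show "rpred 2 (\<lambda>ys. \<forall>k<psnd (nthc (ys ! 1) (ys ! 0)).
            nthc (psnd (nthc (ys ! 1) (ys ! 0))) k = 0 \<or>
            (\<exists>i<ys ! 0. pfst (nthc (ys ! 1) i) = nthc (psnd (nthc (ys ! 1) (ys ! 0))) k))"
      by (rule rpred_all_less'[OF _ _ Q3]) (auto intro!: cf_proj cf_psnd cf_nthc simp: numeral_eq_Suc)
  qed
  show ?thesis unfolding valid_def
    by (rule rpred_all_less'[OF _ _ Q2]) (auto intro!: cf_proj cf_psnd cf_nthc simp: numeral_eq_Suc)
qed

lemma decide:
  assumes R: "rpred 2 (\<lambda>xs. Rule (xs ! 0) (xs ! 1))"
    and tot: "\<forall>n. \<exists>b. Dv Rule (prod_encode (tag, prod_encode (n, b)))"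
  shows "\<exists>X. recursive_set X \<and> (\<forall>n. (n \<in> X \<longrightarrow> Dv Rule (prod_encode (tag, prod_encode (n, 1)))) \<and>
            (n \<notin> X \<longrightarrow> (\<exists>b. b \<noteq> 1 \<and> Dv Rule (prod_encode (tag, prod_encode (n, b))))))"
proof -
  define Q where "Q n y \<longleftrightarrow> valid Rule (psnd y) \<and>
      (\<exists>j<psnd y. pfst (nthc (psnd y) j) = prod_encode (tag, prod_encode (n, pfst y)))" for n y
  have V: "rpred 1 (\<lambda>xs. valid Rule (xs ! 0))" by (rule rpred_valid[OF R])
  \<comment> \<open>ys = [j, y, n]\<close>
  have Q3: "rpred 3 (\<lambda>ys. pfst (nthc (psnd (ys ! 1)) (ys ! 0)) = prod_encode (tag, prod_encode (ys ! 2, pfst (ys ! 1))))"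
    by (intro rpred_eq cf_pfst cf_psnd cf_nthc cf_proj cf_pe cf_const) auto
  have Qr: "rpred 2 (\<lambda>ys. Q (ys ! 1) (ys ! 0))"
    unfolding Q_def
  proof (rule rpred_and)
    show "rpred 2 (\<lambda>ys. valid Rule (psnd (ys ! 0)))"
      by (rule rpred_comp1[OF V]) (intro cf_psnd cf_proj, simp)
    show "rpred 2 (\<lambda>ys. \<exists>j<psnd (ys ! 0). pfst (nthc (psnd (ys ! 0)) j) = prod_encode (tag, prod_encode (ys ! 1, pfst (ys ! 0))))"
      by (rule rpred_ex_less'[OF _ _ Q3]) (auto intro!: cf_proj cf_psnd cf_nthc simp: numeral_eq_Suc)
  qed
  have ex: "\<exists>y. Q n y" for n
  proof -
    obtain b where "Dv Rule (prod_encode (tag, prod_encode (n, b)))" using tot by blast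
    then obtain l where "valid Rule l" "\<exists>j<l. pfst (nthc l j) = prod_encode (tag, prod_encode (n, b))"
      using Dv_valid by blast
    then show ?thesis unfolding Q_def by (intro exI[of _ "prod_encode (b, l)"]) simp
  qed
  define g where "g n = (LEAST y. Q n y)" for n
  have Qg: "Q n (g n)" for n unfolding g_def using ex by (rule LeastI_ex)
  have cg: "cf 1 (\<lambda>xs. LEAST y. Q ((y # xs) ! 1) ((y # xs) ! 0))"
    by (rule cf_mu_pred) (use Qr in \<open>simp add: numeral_2_eq_2\<close>, auto simp: ex)
  have cg2: "cf 1 (\<lambda>xs. g (xs ! 0))"
    by (rule cf_cong[OF cg]) (simp add: g_def)
  define X where "X = {n. pfst (g n) = 1}"
  have "rpred 1 (\<lambda>xs. pfst (g (xs ! 0)) = 1)"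
    by (intro rpred_eq cf_pfst cg2 cf_const)
  then obtain f where f: "recfn 1 f" "\<forall>xs. length xs = 1 \<longrightarrow> f xs = (if pfst (g (xs ! 0)) = 1 then 1 else 0)"
    unfolding rpred_def cf_def by blast
  have "recursive_set X" unfolding recursive_set_def X_def
    using f by (intro exI[of _ f]) auto
  moreover have "Dv Rule (prod_encode (tag, prod_encode (n, pfst (g n))))" for n
  proof -
    from Qg[of n] obtain j where "pfst (nthc (psnd (g n)) j) = prod_encode (tag, prod_encode (n, pfst (g n)))"
      "valid Rule (psnd (g n))"
      unfolding Q_def by blast
    then show ?thesis using valid_Dv by metis
  qed
  ultimately show ?thesis unfolding X_def
    by (intro exI[of _ X]) (auto simp: X_def, metis)
qed


section \<open>Substitution lemmas\<close>

lemma subst_tm_comp: "subst_tm \<sigma> (subst_tm \<tau> t) = subst_tm (\<lambda>i. subst_tm \<sigma> (\<tau> i)) t"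
  by (induction t) auto

lemma subst_tm_cong: "(\<forall>i\<in>fv_tm t. \<sigma> i = \<tau> i) \<Longrightarrow> subst_tm \<sigma> t = subst_tm \<tau> t"
  by (induction t) auto

lemma subst_tm_id: "(\<forall>i\<in>fv_tm t. \<sigma> i = Var i) \<Longrightarrow> subst_tm \<sigma> t = t"
  by (induction t) (auto intro: map_idI)

lemma subst_fm_cong: "(\<forall>i\<in>fv_fm p. \<sigma> i = \<tau> i) \<Longrightarrow> subst_fm \<sigma> p = subst_fm \<tau> p"
proof (induction p arbitrary: \<sigma> \<tau>)
  case (All p)
  have "\<forall>i\<in>fv_fm p. up \<sigma> i = up \<tau> i"
    using All.prems by (auto simp: up_def split: nat.splits)
  then show ?case using All.IH by simp
qed (auto intro: subst_tm_cong)

lemma subst_fm_id: "(\<forall>i\<in>fv_fm p. \<sigma> i = Var i) \<Longrightarrow> subst_fm \<sigma> p = p"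
proof (induction p arbitrary: \<sigma>)
  case (All p)
  have "\<forall>i\<in>fv_fm p. up \<sigma> i = Var i"
    using All.prems by (auto simp: up_def split: nat.splits)
  then show ?case using All.IH by simp
qed (auto intro: subst_tm_id map_idI)

lemma fv_subst_tm: "fv_tm (subst_tm \<sigma> t) = (\<Union>i\<in>fv_tm t. fv_tm (\<sigma> i))"
  by (induction t) auto

lemma fv_up: "fv_tm (up \<sigma> i) = (case i of 0 \<Rightarrow> {0} | Suc j \<Rightarrow> Suc ` fv_tm (\<sigma> j))"
  by (cases i) (auto simp: up_def fv_subst_tm)

lemma fv_subst_fm: "fv_fm (subst_fm \<sigma> p) = (\<Union>i\<in>fv_fm p. fv_tm (\<sigma> i))"
proof (induction p arbitrary: \<sigma>)
  case (All p)
  show ?case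
  proof (rule set_eqI)
    fix x
    have "x \<in> fv_fm (subst_fm \<sigma> (All p)) \<longleftrightarrow> (\<exists>j\<in>fv_fm p. Suc x \<in> fv_tm (up \<sigma> j))"
      using All.IH by simp
    also have "\<dots> \<longleftrightarrow> (\<exists>j'. Suc j' \<in> fv_fm p \<and> x \<in> fv_tm (\<sigma> j'))"
    proof
      assume "\<exists>j\<in>fv_fm p. Suc x \<in> fv_tm (up \<sigma> j)"
      then obtain j where j: "j \<in> fv_fm p" "Suc x \<in> fv_tm (up \<sigma> j)" by blast
      show "\<exists>j'. Suc j' \<in> fv_fm p \<and> x \<in> fv_tm (\<sigma> j')"
      proof (cases j)
        case 0
        then show ?thesis using j by (simp add: fv_up)
      next
        case (Suc j')
        then show ?thesis using j by (auto simp: fv_up)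
      qed
    next
      assume "\<exists>j'. Suc j' \<in> fv_fm p \<and> x \<in> fv_tm (\<sigma> j')"
      then obtain j' where "Suc j' \<in> fv_fm p" "x \<in> fv_tm (\<sigma> j')" by blast
      then show "\<exists>j\<in>fv_fm p. Suc x \<in> fv_tm (up \<sigma> j)"
        by (intro bexI[of _ "Suc j'"]) (auto simp: fv_up)
    qed
    also have "\<dots> \<longleftrightarrow> x \<in> (\<Union>i\<in>fv_fm (All p). fv_tm (\<sigma> i))" by auto
    finally show "x \<in> fv_fm (subst_fm \<sigma> (All p)) \<longleftrightarrow> x \<in> (\<Union>i\<in>fv_fm (All p). fv_tm (\<sigma> i))" .
  qed
qed (auto simp: fv_subst_tm)

lemma wf_subst_tm: "wf_tm L t \<Longrightarrow> (\<forall>i. wf_tm L (\<sigma> i)) \<Longrightarrow> wf_tm L (subst_tm \<sigma> t)"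
  by (induction t) auto

lemma wf_up: "(\<forall>i. wf_tm L (\<sigma> i)) \<Longrightarrow> wf_tm L (up \<sigma> i)"
  by (cases i) (auto simp: up_def intro: wf_subst_tm)

lemma wf_subst_fm: "wf_fm L p \<Longrightarrow> (\<forall>i. wf_tm L (\<sigma> i)) \<Longrightarrow> wf_fm L (subst_fm \<sigma> p)"
proof (induction p arbitrary: \<sigma>)
  case (All p)
  then show ?case using wf_up by simp
qed (auto intro: wf_subst_tm)

definition shf :: "nat \<Rightarrow> nat \<Rightarrow> nat \<Rightarrow> tm" where
  "shf s d i = Var (if i < d then i else i + s)"

definition sigi :: "nat \<Rightarrow> tm \<Rightarrow> nat \<Rightarrow> tm" where
  "sigi d t i = (if i < d then Var i else if i = d then subst_tm (shf d 0) t else Var (i - 1))"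

lemma up_shf: "up (shf s d) = shf s (Suc d)"
  by (rule ext) (auto simp: up_def shf_def split: nat.splits)

lemma shf_comp: "subst_tm (\<lambda>m. Var (Suc m)) (subst_tm (shf d 0) t) = subst_tm (shf (Suc d) 0) t"
  unfolding subst_tm_comp by (rule arg_cong[where f="\<lambda>\<sigma>. subst_tm \<sigma> t"]) (auto simp: shf_def)

lemma up_sigi: "up (sigi d t) = sigi (Suc d) t"
  by (rule ext) (auto simp: up_def sigi_def shf_comp split: nat.splits)

lemma shf00: "subst_tm (shf 0 0) t = t"
  by (rule subst_tm_id) (simp add: shf_def)

lemma inst_sigi: "inst p t = subst_fm (sigi 0 t) p"
proof -
  have "(\<lambda>i. case i of 0 \<Rightarrow> t | Suc j \<Rightarrow> Var j) = sigi 0 t"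
    by (rule ext) (auto simp: sigi_def shf00 split: nat.splits)
  then show ?thesis by (simp add: inst_def)
qed

lemma lift_shf: "lift_fm p = subst_fm (shf 1 0) p"
proof -
  have "(\<lambda>i. Var (Suc i)) = shf 1 0"
    by (rule ext) (auto simp: shf_def)
  then show ?thesis by (simp add: lift_fm_def)
qed

lemma wf_shf: "wf_tm L (shf s d i)"
  by (simp add: shf_def)

lemma wf_sigi: "wf_tm L t \<Longrightarrow> wf_tm L (sigi d t i)"
  by (auto simp: sigi_def intro: wf_subst_tm wf_shf)

lemma wf_inst: "wf_fm L p \<Longrightarrow> wf_tm L t \<Longrightarrow> wf_fm L (inst p t)"
  unfolding inst_sigi by (rule wf_subst_fm) (auto intro: wf_sigi)

lemma wf_lift: "wf_fm L p \<Longrightarrow> wf_fm L (lift_fm p)"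
  unfolding lift_shf by (rule wf_subst_fm) (auto intro: wf_shf)

section \<open>Encoding lemmas\<close>

lemma map_inj_aux: "(\<forall>x\<in>set xs. \<forall>y. f x = f y \<longrightarrow> x = y) \<Longrightarrow> map f xs = map f ys \<Longrightarrow> xs = ys"
proof (induction xs arbitrary: ys)
  case Nil
  then show ?case by simp
next
  case (Cons x xs)
  then show ?case by (cases ys) auto
qed

lemma enc_tm_inj: "enc_tm s = enc_tm t \<Longrightarrow> s = t"
proof (induction s arbitrary: t)
  case (Var i)
  then show ?case by (cases t) auto
next
  case (Fn f ts)
  show ?case
  proof (cases t)
    case (Var x)
    then show ?thesis using Fn.prems by simp
  next
    case (Fn g us)
    then have "f = g" "map enc_tm ts = map enc_tm us"
      using Fn.prems by (simp_all add: list_encode_eq)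
    moreover have "ts = us"
      by (rule map_inj_aux[OF _ calculation(2)]) (use Fn.IH in blast)
    ultimately show ?thesis using Fn by simp
  qed
qed

lemma enc_tm_eq[simp]: "enc_tm s = enc_tm t \<longleftrightarrow> s = t"
  using enc_tm_inj by blast

lemma enc_tms_eq[simp]: "list_encode (map enc_tm ss) = list_encode (map enc_tm ts) \<longleftrightarrow> ss = ts"
proof
  assume "list_encode (map enc_tm ss) = list_encode (map enc_tm ts)"
  then have "map enc_tm ss = map enc_tm ts" by (simp only: list_encode_eq)
  then show "ss = ts" by (rule map_inj_aux[rotated]) (use enc_tm_inj in blast)
qed simp

lemma enc_fm_inj: "enc_fm p = enc_fm q \<Longrightarrow> p = q"
proof (induction p arbitrary: q)
  case Bot
  then show ?case by (cases q) auto
next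
  case (Eq s t)
  then show ?case by (cases q) auto
next
  case (Rel r ts)
  then show ?case by (cases q) auto
next
  case (Imp p1 p2)
  then show ?case by (cases q) auto
next
  case (All p)
  then show ?case by (cases q) auto
qed

lemma enc_fm_eq[simp]: "enc_fm p = enc_fm q \<longleftrightarrow> p = q"
  using enc_fm_inj by blast

lemma enc_tm_pe: "enc_tm t = prod_encode (a, b) \<longleftrightarrow>
   (a = 0 \<and> t = Var b) \<or> (a = 1 \<and> (\<exists>f ts. t = Fn f ts \<and> b = prod_encode (f, list_encode (map enc_tm ts))))"
  by (cases t) auto

lemma enc_tms_0: "list_encode (map enc_tm ts) = 0 \<longleftrightarrow> ts = []"
  by (cases ts) auto

lemma enc_tms_Suc: "list_encode (map enc_tm ts) = Suc x \<longleftrightarrow>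
   (\<exists>t ts'. ts = t # ts' \<and> x = prod_encode (enc_tm t, list_encode (map enc_tm ts')))"
  by (cases ts) auto

lemma enc_fm_pe: "enc_fm p = prod_encode (a, b) \<longleftrightarrow>
   (a = 0 \<and> b = 0 \<and> p = Bot) \<or>
   (a = 1 \<and> (\<exists>s t. p = Eq s t \<and> b = prod_encode (enc_tm s, enc_tm t))) \<or>
   (a = 2 \<and> (\<exists>r ts. p = Rel r ts \<and> b = prod_encode (r, list_encode (map enc_tm ts)))) \<or>
   (a = 3 \<and> (\<exists>p1 p2. p = Imp p1 p2 \<and> b = prod_encode (enc_fm p1, enc_fm p2))) \<or>
   (a = 4 \<and> (\<exists>p1. p = All p1 \<and> b = enc_fm p1))"
  by (cases p) (simp_all, blast+)

section \<open>Provability facts\<close>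

lemma wf_Neg[simp]: "wf_fm L (Neg p) = wf_fm L p" by (simp add: Neg_def)

lemma prov_wf: "prov L p \<Longrightarrow> wf_fm L p"
  by (induction rule: prov.induct) (auto simp: wf_inst wf_lift)

lemma imp_refl: "wf_fm L p \<Longrightarrow> prov L (Imp p p)"
proof -
  assume p: "wf_fm L p"
  have 1: "prov L (Imp (Imp p (Imp (Imp p p) p)) (Imp (Imp p (Imp p p)) (Imp p p)))"
    using p by (intro ax2) auto
  have 2: "prov L (Imp p (Imp (Imp p p) p))" using p by (intro ax1) auto
  have 3: "prov L (Imp p (Imp p p))" using p by (intro ax1) auto
  show ?thesis using mp[OF mp[OF 1 2] 3] .
qed

lemma weak: "prov L X \<Longrightarrow> wf_fm L a \<Longrightarrow> prov L (Imp a X)"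
  using mp[OF ax1 _] prov_wf by blast

lemma mp_under: "prov L (Imp a (Imp X Y)) \<Longrightarrow> prov L (Imp a X) \<Longrightarrow> prov L (Imp a Y)"
proof -
  assume 1: "prov L (Imp a (Imp X Y))" and 2: "prov L (Imp a X)"
  then have "wf_fm L a" "wf_fm L X" "wf_fm L Y" using prov_wf by fastforce+
  then have "prov L (Imp (Imp a (Imp X Y)) (Imp (Imp a X) (Imp a Y)))" by (rule ax2)
  then show ?thesis using mp 1 2 by blast
qed

lemma imp_trans: "prov L (Imp P Q) \<Longrightarrow> prov L (Imp Q R) \<Longrightarrow> prov L (Imp P R)"
proof -
  assume 1: "prov L (Imp P Q)" and 2: "prov L (Imp Q R)"
  have "wf_fm L P" using prov_wf[OF 1] by simp
  then have "prov L (Imp P (Imp Q R))" using weak 2 by blast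
  then show ?thesis using mp_under 1 by blast
qed

lemma wf_foldr: "wf_fm L (foldr Imp as X) \<longleftrightarrow> (\<forall>a\<in>set as. wf_fm L a) \<and> wf_fm L X"
  by (induction as) auto

lemma WL: "prov L X \<Longrightarrow> \<forall>a\<in>set as. wf_fm L a \<Longrightarrow> prov L (foldr Imp as X)"
  by (induction as) (auto intro: weak)

lemma KL: "wf_fm L X \<Longrightarrow> wf_fm L Y \<Longrightarrow> \<forall>a\<in>set as. wf_fm L a \<Longrightarrow>
  prov L (Imp (foldr Imp as (Imp X Y)) (Imp (foldr Imp as X) (foldr Imp as Y)))"
proof (induction as)
  case Nil
  then show ?case using imp_refl[of L "Imp X Y"] by simp
next
  case (Cons a as)
  let ?A = "foldr Imp as (Imp X Y)" and ?B = "foldr Imp as X" and ?C = "foldr Imp as Y"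
  have IH: "prov L (Imp ?A (Imp ?B ?C))" using Cons by simp
  have wa: "wf_fm L a" "wf_fm L ?A" "wf_fm L ?B" "wf_fm L ?C" using Cons.prems by (auto simp: wf_foldr)
  have s1: "prov L (Imp a (Imp ?A (Imp ?B ?C)))" using weak[OF IH wa(1)] .
  have "prov L (Imp (Imp a (Imp ?A (Imp ?B ?C))) (Imp (Imp a ?A) (Imp a (Imp ?B ?C))))"
    by (rule ax2) (use wa in auto)
  then have s2: "prov L (Imp (Imp a ?A) (Imp a (Imp ?B ?C)))"
    using mp s1 by blast
  have s3: "prov L (Imp (Imp a (Imp ?B ?C)) (Imp (Imp a ?B) (Imp a ?C)))"
    by (rule ax2) (use wa in auto)
  show ?case using imp_trans[OF s2 s3] by simp
qed

lemma MPL: "prov L (foldr Imp as (Imp X Y)) \<Longrightarrow> prov L (foldr Imp as X) \<Longrightarrow> prov L (foldr Imp as Y)"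
proof -
  assume 1: "prov L (foldr Imp as (Imp X Y))" and 2: "prov L (foldr Imp as X)"
  have "wf_fm L X" "wf_fm L Y" "\<forall>a\<in>set as. wf_fm L a" using prov_wf[OF 1] by (auto simp: wf_foldr)
  then show ?thesis using mp[OF mp[OF KL 1] 2] by blast
qed

lemma IW: "wf_fm L Z \<Longrightarrow> \<forall>b\<in>set bs. wf_fm L b \<Longrightarrow> prov L (Imp Z (foldr Imp bs Z))"
proof (induction bs)
  case Nil
  then show ?case using imp_refl by simp
next
  case (Cons b bs)
  then have "prov L (Imp (foldr Imp bs Z) (Imp b (foldr Imp bs Z)))"
    by (intro ax1) (auto simp: wf_foldr)
  moreover have "prov L (Imp Z (foldr Imp bs Z))" using Cons by simp
  ultimately show ?case using imp_trans by simp
qed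

lemma thm_mp:
  assumes T: "\<forall>a\<in>snd T. wf_fm (fst T) a"
    and 1: "thm_of T (Imp p q)" and 2: "thm_of T p"
  shows "thm_of T q"
proof -
  obtain as1 where a1: "set as1 \<subseteq> snd T" "prov (fst T) (foldr Imp as1 (Imp p q))"
    using 1 unfolding thm_of_def by blast
  obtain as2 where a2: "set as2 \<subseteq> snd T" "prov (fst T) (foldr Imp as2 p)"
    using 2 unfolding thm_of_def by blast
  have w1: "\<forall>a\<in>set as1. wf_fm (fst T) a" and w2: "\<forall>a\<in>set as2. wf_fm (fst T) a"
    using a1 a2 T by auto
  have wpq: "wf_fm (fst T) (Imp p q)" using prov_wf[OF a1(2)] by (simp add: wf_foldr)
  have A: "prov (fst T) (foldr Imp as1 (foldr Imp as2 p))" using WL[OF a2(2) w1] .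
  have B0: "prov (fst T) (foldr Imp as1 (Imp (Imp p q) (foldr Imp as2 (Imp p q))))"
    using WL[OF IW[OF wpq w2] w1] .
  have B: "prov (fst T) (foldr Imp as1 (foldr Imp as2 (Imp p q)))" using MPL[OF B0 a1(2)] .
  have "prov (fst T) (foldr Imp (as1 @ as2) q)"
    using MPL[of "fst T" "as1 @ as2" p q] A B by simp
  then show ?thesis unfolding thm_of_def using a1 a2 by (intro exI[of _ "as1 @ as2"]) auto
qed


abbreviation pe :: "nat \<Rightarrow> nat \<Rightarrow> nat" where "pe a b \<equiv> prod_encode (a, b)"
abbreviation q4 :: "nat \<Rightarrow> nat \<Rightarrow> nat \<Rightarrow> nat \<Rightarrow> nat" where "q4 a b x y \<equiv> pe a (pe b (pe x y))"
abbreviation eI :: "nat \<Rightarrow> nat \<Rightarrow> nat" where "eI a b \<equiv> pe 3 (pe a b)"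
abbreviation eN :: "nat \<Rightarrow> nat" where "eN a \<equiv> eI a (pe 0 0)"
abbreviation eAnd :: "nat \<Rightarrow> nat \<Rightarrow> nat" where "eAnd a b \<equiv> eN (eI a (eN b))"
abbreviation encG :: "nat \<Rightarrow> nat \<Rightarrow> nat \<Rightarrow> nat" where
  "encG c1 c2 e \<equiv> eN (pe 4 (eN (eAnd c1 (eAnd e c2))))"

lemma conv_pe1: "(z = prod_encode (a, b)) \<longleftrightarrow> (pfst z = a \<and> psnd z = b)"
  using pe_split[of z] by auto
lemma conv_pe2: "(prod_encode (a, b) = z) \<longleftrightarrow> (pfst z = a \<and> psnd z = b)"
  using pe_split[of z] by auto
lemma conv_Suc1: "(z = Suc w) \<longleftrightarrow> (0 < z \<and> z - 1 = w)" by auto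
lemma conv_Suc2: "(Suc w = z) \<longleftrightarrow> (0 < z \<and> z - 1 = w)" by auto
lemmas conv_simps = conv_pe1 conv_pe2 conv_Suc1 conv_Suc2

lemma cf_x0: "cf 2 (\<lambda>xs. xs ! 0)" by (rule cf_proj) simp
lemma cf_x1: "cf 2 (\<lambda>xs. xs ! 1)" by (rule cf_proj) simp
lemma cf_x1': "cf 2 (\<lambda>xs. xs ! Suc 0)" by (rule cf_proj) simp

definition LFc :: "lang \<Rightarrow> nat set" where "LFc L = {pe f k | f k. fst L f = Some k}"
definition LRc :: "lang \<Rightarrow> nat set" where "LRc L = {pe r k | r k. snd L r = Some k}"
definition AXc :: "fm set \<Rightarrow> nat set" where "AXc Ax = enc_fm ` Ax"

abbreviation EL :: "tm list \<Rightarrow> nat" where "EL ts \<equiv> list_encode (map enc_tm ts)"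

lemma enc_tm_pe': "prod_encode (a, b) = enc_tm t \<longleftrightarrow>
   (a = 0 \<and> t = Var b) \<or> (a = 1 \<and> (\<exists>f ts. t = Fn f ts \<and> b = prod_encode (f, list_encode (map enc_tm ts))))"
  by (subst eq_commute) (rule enc_tm_pe)
lemma enc_fm_pe': "prod_encode (a, b) = enc_fm p \<longleftrightarrow>
   (a = 0 \<and> b = 0 \<and> p = Bot) \<or>
   (a = 1 \<and> (\<exists>s t. p = Eq s t \<and> b = prod_encode (enc_tm s, enc_tm t))) \<or>
   (a = 2 \<and> (\<exists>r ts. p = Rel r ts \<and> b = prod_encode (r, list_encode (map enc_tm ts)))) \<or>
   (a = 3 \<and> (\<exists>p1 p2. p = Imp p1 p2 \<and> b = prod_encode (enc_fm p1, enc_fm p2))) \<or>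
   (a = 4 \<and> (\<exists>p1. p = All p1 \<and> b = enc_fm p1))"
  by (subst eq_commute) (rule enc_fm_pe)
lemma enc_tms_0': "0 = list_encode (map enc_tm ts) \<longleftrightarrow> ts = []"
  by (subst eq_commute) (rule enc_tms_0)
lemma enc_tms_Suc': "Suc x = list_encode (map enc_tm ts) \<longleftrightarrow>
   (\<exists>t ts'. ts = t # ts' \<and> x = prod_encode (enc_tm t, list_encode (map enc_tm ts')))"
  by (subst eq_commute) (rule enc_tms_Suc)

lemma LFc_mem[simp]: "pe f k \<in> LFc L \<longleftrightarrow> fst L f = Some k" by (auto simp: LFc_def)
lemma LRc_mem[simp]: "pe f k \<in> LRc L \<longleftrightarrow> snd L f = Some k" by (auto simp: LRc_def)

lemma ax_inst': "wf_fm L p \<Longrightarrow> wf_tm L t \<Longrightarrow> prov L (Imp (All p) (subst_fm (sigi 0 t) p))"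
  unfolding inst_sigi[symmetric] by (rule ax_inst)
lemma ax_vac': "wf_fm L p \<Longrightarrow> prov L (Imp p (All (subst_fm (shf 1 0) p)))"
  unfolding lift_shf[symmetric] by (rule ax_vac)
lemma ax_leib': "wf_fm L p \<Longrightarrow> wf_tm L s \<Longrightarrow> wf_tm L t \<Longrightarrow>
   prov L (Imp (Eq s t) (Imp (subst_fm (sigi 0 s) p) (subst_fm (sigi 0 t) p)))"
  unfolding inst_sigi[symmetric] by (rule ax_leib)
lemma ax3': "wf_fm L p \<Longrightarrow> prov L (Imp (Imp (Imp p Bot) Bot) p)"
  using ax3[of L p] unfolding Neg_def .

lemmas enc_simps = enc_tm_pe enc_fm_pe enc_tm_pe' enc_fm_pe' enc_tms_0 enc_tms_Suc enc_tms_0' enc_tms_Suc'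
  shf_def sigi_def up_shf up_sigi


locale sys =
  fixes L :: lang and Ax :: "fm set" and E0 cD0 cP1 cPR :: nat and T phi :: "nat \<Rightarrow> fm"
  assumes T0: "enc_fm (T 0) = E0"
    and TS: "enc_fm (T (Suc n)) = encG cD0 cP1 (enc_fm (T n))"
    and phiE: "enc_fm (phi n) = encG cD0 cPR (enc_fm (T n))"
    and LFrec: "recursive_set (LFc L)" and LRrec: "recursive_set (LRc L)"
    and AXrec: "recursive_set (AXc Ax)"
begin

abbreviation "LFc' \<equiv> LFc L"
abbreviation "LRc' \<equiv> LRc L"
abbreviation "AXc' \<equiv> AXc Ax"

lemmas rpred_intros = rpred_or rpred_and rpred_not rpred_imp rpred_eq rpred_less rpred_le cf_if cf_pe cf_pfst cf_psnd
  cf_nthc cf_Suc cf_add cf_sub cf_const cf_x0 cf_x1 cf_x1' rpred_mem[OF LFrec] rpred_mem[OF LRrec] rpred_mem[OF AXrec]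

definition R_wft_var :: "nat \<Rightarrow> nat \<Rightarrow> bool" where
  "R_wft_var c P \<longleftrightarrow> (\<exists>i. c = pe 1 (pe 0 i))"

definition R_wft_fn :: "nat \<Rightarrow> nat \<Rightarrow> bool" where
  "R_wft_fn c P \<longleftrightarrow> (\<exists>f l k. c = pe 1 (pe 1 (pe f l)) \<and> nthc P 0 = pe 2 (pe l k) \<and> pe f k \<in> LFc')"

definition R_wftl_nil :: "nat \<Rightarrow> nat \<Rightarrow> bool" where
  "R_wftl_nil c P \<longleftrightarrow> (c = pe 2 (pe 0 0))"

definition R_wftl_cons :: "nat \<Rightarrow> nat \<Rightarrow> bool" where
  "R_wftl_cons c P \<longleftrightarrow> (\<exists>a l k. c = pe 2 (pe (Suc (pe a l)) (Suc k)) \<and> nthc P 0 = pe 1 a \<and> nthc P 1 = pe 2 (pe l k))"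

definition R_wff_bot :: "nat \<Rightarrow> nat \<Rightarrow> bool" where
  "R_wff_bot c P \<longleftrightarrow> (c = pe 3 (pe 0 0))"

definition R_wff_eq :: "nat \<Rightarrow> nat \<Rightarrow> bool" where
  "R_wff_eq c P \<longleftrightarrow> (\<exists>a b. c = pe 3 (pe 1 (pe a b)) \<and> nthc P 0 = pe 1 a \<and> nthc P 1 = pe 1 b)"

definition R_wff_rel :: "nat \<Rightarrow> nat \<Rightarrow> bool" where
  "R_wff_rel c P \<longleftrightarrow> (\<exists>r l k. c = pe 3 (pe 2 (pe r l)) \<and> nthc P 0 = pe 2 (pe l k) \<and> pe r k \<in> LRc')"

definition R_wff_imp :: "nat \<Rightarrow> nat \<Rightarrow> bool" where
  "R_wff_imp c P \<longleftrightarrow> (\<exists>a b. c = pe 3 (pe 3 (pe a b)) \<and> nthc P 0 = pe 3 a \<and> nthc P 1 = pe 3 b)"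

definition R_wff_all :: "nat \<Rightarrow> nat \<Rightarrow> bool" where
  "R_wff_all c P \<longleftrightarrow> (\<exists>a. c = pe 3 (pe 4 a) \<and> nthc P 0 = pe 3 a)"

definition R_sh_var :: "nat \<Rightarrow> nat \<Rightarrow> bool" where
  "R_sh_var c P \<longleftrightarrow> (\<exists>s d i. c = pe 4 (q4 s d (pe 0 i) (pe 0 (if i < d then i else i + s))))"

definition R_sh_fn :: "nat \<Rightarrow> nat \<Rightarrow> bool" where
  "R_sh_fn c P \<longleftrightarrow> (\<exists>s d f l l'. c = pe 4 (q4 s d (pe 1 (pe f l)) (pe 1 (pe f l'))) \<and> nthc P 0 = pe 5 (q4 s d l l'))"

definition R_shl_nil :: "nat \<Rightarrow> nat \<Rightarrow> bool" where
  "R_shl_nil c P \<longleftrightarrow> (\<exists>s d. c = pe 5 (q4 s d 0 0))"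

definition R_shl_cons :: "nat \<Rightarrow> nat \<Rightarrow> bool" where
  "R_shl_cons c P \<longleftrightarrow> (\<exists>s d a l a' l'. c = pe 5 (q4 s d (Suc (pe a l)) (Suc (pe a' l'))) \<and> nthc P 0 = pe 4 (q4 s d a a') \<and> nthc P 1 = pe 5 (q4 s d l l'))"

definition R_shf_bot :: "nat \<Rightarrow> nat \<Rightarrow> bool" where
  "R_shf_bot c P \<longleftrightarrow> (\<exists>s d. c = pe 6 (q4 s d (pe 0 0) (pe 0 0)))"

definition R_shf_eq :: "nat \<Rightarrow> nat \<Rightarrow> bool" where
  "R_shf_eq c P \<longleftrightarrow> (\<exists>s d a b a' b'. c = pe 6 (q4 s d (pe 1 (pe a b)) (pe 1 (pe a' b'))) \<and> nthc P 0 = pe 4 (q4 s d a a') \<and> nthc P 1 = pe 4 (q4 s d b b'))"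

definition R_shf_rel :: "nat \<Rightarrow> nat \<Rightarrow> bool" where
  "R_shf_rel c P \<longleftrightarrow> (\<exists>s d r l l'. c = pe 6 (q4 s d (pe 2 (pe r l)) (pe 2 (pe r l'))) \<and> nthc P 0 = pe 5 (q4 s d l l'))"

definition R_shf_imp :: "nat \<Rightarrow> nat \<Rightarrow> bool" where
  "R_shf_imp c P \<longleftrightarrow> (\<exists>s d a b a' b'. c = pe 6 (q4 s d (pe 3 (pe a b)) (pe 3 (pe a' b'))) \<and> nthc P 0 = pe 6 (q4 s d a a') \<and> nthc P 1 = pe 6 (q4 s d b b'))"

definition R_shf_all :: "nat \<Rightarrow> nat \<Rightarrow> bool" where
  "R_shf_all c P \<longleftrightarrow> (\<exists>s d a a'. c = pe 6 (q4 s d (pe 4 a) (pe 4 a')) \<and> nthc P 0 = pe 6 (q4 s (Suc d) a a'))"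

definition R_in_var1 :: "nat \<Rightarrow> nat \<Rightarrow> bool" where
  "R_in_var1 c P \<longleftrightarrow> (\<exists>d t i. i \<noteq> d \<and> c = pe 7 (q4 d t (pe 0 i) (pe 0 (if i < d then i else i - 1))))"

definition R_in_var2 :: "nat \<Rightarrow> nat \<Rightarrow> bool" where
  "R_in_var2 c P \<longleftrightarrow> (\<exists>d t y. c = pe 7 (q4 d t (pe 0 d) y) \<and> nthc P 0 = pe 4 (q4 d 0 t y))"

definition R_in_fn :: "nat \<Rightarrow> nat \<Rightarrow> bool" where
  "R_in_fn c P \<longleftrightarrow> (\<exists>d t f l l'. c = pe 7 (q4 d t (pe 1 (pe f l)) (pe 1 (pe f l'))) \<and> nthc P 0 = pe 8 (q4 d t l l'))"

definition R_inl_nil :: "nat \<Rightarrow> nat \<Rightarrow> bool" where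
  "R_inl_nil c P \<longleftrightarrow> (\<exists>d t. c = pe 8 (q4 d t 0 0))"

definition R_inl_cons :: "nat \<Rightarrow> nat \<Rightarrow> bool" where
  "R_inl_cons c P \<longleftrightarrow> (\<exists>d t a l a' l'. c = pe 8 (q4 d t (Suc (pe a l)) (Suc (pe a' l'))) \<and> nthc P 0 = pe 7 (q4 d t a a') \<and> nthc P 1 = pe 8 (q4 d t l l'))"

definition R_inf_bot :: "nat \<Rightarrow> nat \<Rightarrow> bool" where
  "R_inf_bot c P \<longleftrightarrow> (\<exists>d t. c = pe 9 (q4 d t (pe 0 0) (pe 0 0)))"

definition R_inf_eq :: "nat \<Rightarrow> nat \<Rightarrow> bool" where
  "R_inf_eq c P \<longleftrightarrow> (\<exists>d t a b a' b'. c = pe 9 (q4 d t (pe 1 (pe a b)) (pe 1 (pe a' b'))) \<and> nthc P 0 = pe 7 (q4 d t a a') \<and> nthc P 1 = pe 7 (q4 d t b b'))"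

definition R_inf_rel :: "nat \<Rightarrow> nat \<Rightarrow> bool" where
  "R_inf_rel c P \<longleftrightarrow> (\<exists>d t r l l'. c = pe 9 (q4 d t (pe 2 (pe r l)) (pe 2 (pe r l'))) \<and> nthc P 0 = pe 8 (q4 d t l l'))"

definition R_inf_imp :: "nat \<Rightarrow> nat \<Rightarrow> bool" where
  "R_inf_imp c P \<longleftrightarrow> (\<exists>d t a b a' b'. c = pe 9 (q4 d t (pe 3 (pe a b)) (pe 3 (pe a' b'))) \<and> nthc P 0 = pe 9 (q4 d t a a') \<and> nthc P 1 = pe 9 (q4 d t b b'))"

definition R_inf_all :: "nat \<Rightarrow> nat \<Rightarrow> bool" where
  "R_inf_all c P \<longleftrightarrow> (\<exists>d t a a'. c = pe 9 (q4 d t (pe 4 a) (pe 4 a')) \<and> nthc P 0 = pe 9 (q4 (Suc d) t a a'))"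

definition R_ax1 :: "nat \<Rightarrow> nat \<Rightarrow> bool" where
  "R_ax1 c P \<longleftrightarrow> (\<exists>a b. c = pe 10 (eI a (eI b a)) \<and> nthc P 0 = pe 3 a \<and> nthc P 1 = pe 3 b)"

definition R_ax2 :: "nat \<Rightarrow> nat \<Rightarrow> bool" where
  "R_ax2 c P \<longleftrightarrow> (\<exists>a b e. c = pe 10 (eI (eI a (eI b e)) (eI (eI a b) (eI a e))) \<and> nthc P 0 = pe 3 a \<and> nthc P 1 = pe 3 b \<and> nthc P 2 = pe 3 e)"

definition R_ax3 :: "nat \<Rightarrow> nat \<Rightarrow> bool" where
  "R_ax3 c P \<longleftrightarrow> (\<exists>a. c = pe 10 (eI (eN (eN a)) a) \<and> nthc P 0 = pe 3 a)"

definition R_axinst :: "nat \<Rightarrow> nat \<Rightarrow> bool" where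
  "R_axinst c P \<longleftrightarrow> (\<exists>a t b. c = pe 10 (eI (pe 4 a) b) \<and> nthc P 0 = pe 3 a \<and> nthc P 1 = pe 1 t \<and> nthc P 2 = pe 9 (q4 0 t a b))"

definition R_axvac :: "nat \<Rightarrow> nat \<Rightarrow> bool" where
  "R_axvac c P \<longleftrightarrow> (\<exists>a b. c = pe 10 (eI a (pe 4 b)) \<and> nthc P 0 = pe 3 a \<and> nthc P 1 = pe 6 (q4 1 0 a b))"

definition R_axdist :: "nat \<Rightarrow> nat \<Rightarrow> bool" where
  "R_axdist c P \<longleftrightarrow> (\<exists>a b. c = pe 10 (eI (pe 4 (eI a b)) (eI (pe 4 a) (pe 4 b))) \<and> nthc P 0 = pe 3 a \<and> nthc P 1 = pe 3 b)"

definition R_axrefl :: "nat \<Rightarrow> nat \<Rightarrow> bool" where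
  "R_axrefl c P \<longleftrightarrow> (\<exists>t. c = pe 10 (pe 1 (pe t t)) \<and> nthc P 0 = pe 1 t)"

definition R_axleib :: "nat \<Rightarrow> nat \<Rightarrow> bool" where
  "R_axleib c P \<longleftrightarrow> (\<exists>a s t x y. c = pe 10 (eI (pe 1 (pe s t)) (eI x y)) \<and> nthc P 0 = pe 3 a \<and> nthc P 1 = pe 1 s \<and> nthc P 2 = pe 1 t \<and> nthc P 3 = pe 9 (q4 0 s a x) \<and> nthc P 4 = pe 9 (q4 0 t a y))"

definition R_mp :: "nat \<Rightarrow> nat \<Rightarrow> bool" where
  "R_mp c P \<longleftrightarrow> (\<exists>a b. c = pe 10 b \<and> nthc P 0 = pe 10 (eI a b) \<and> nthc P 1 = pe 10 a)"

definition R_gen :: "nat \<Rightarrow> nat \<Rightarrow> bool" where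
  "R_gen c P \<longleftrightarrow> (\<exists>a. c = pe 10 (pe 4 a) \<and> nthc P 0 = pe 10 a)"

definition R_imps0 :: "nat \<Rightarrow> nat \<Rightarrow> bool" where
  "R_imps0 c P \<longleftrightarrow> (\<exists>p. c = pe 11 (pe p p) \<and> nthc P 0 = pe 3 p)"

definition R_imps1 :: "nat \<Rightarrow> nat \<Rightarrow> bool" where
  "R_imps1 c P \<longleftrightarrow> (\<exists>a q p. c = pe 11 (pe (eI a q) p) \<and> nthc P 0 = pe 11 (pe q p) \<and> a \<in> AXc')"

definition R_thm :: "nat \<Rightarrow> nat \<Rightarrow> bool" where
  "R_thm c P \<longleftrightarrow> (\<exists>p q. c = pe 12 p \<and> nthc P 0 = pe 10 q \<and> nthc P 1 = pe 11 (pe q p))"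

definition R_t0 :: "nat \<Rightarrow> nat \<Rightarrow> bool" where
  "R_t0 c P \<longleftrightarrow> (c = pe 13 (pe 0 E0))"

definition R_tS :: "nat \<Rightarrow> nat \<Rightarrow> bool" where
  "R_tS c P \<longleftrightarrow> (\<exists>n e. c = pe 13 (pe (Suc n) (encG cD0 cP1 e)) \<and> nthc P 0 = pe 13 (pe n e))"

definition R_res1 :: "nat \<Rightarrow> nat \<Rightarrow> bool" where
  "R_res1 c P \<longleftrightarrow> (\<exists>n e. c = pe 14 (pe n 1) \<and> nthc P 0 = pe 13 (pe n e) \<and> nthc P 1 = pe 12 (encG cD0 cPR e))"

definition R_res0 :: "nat \<Rightarrow> nat \<Rightarrow> bool" where
  "R_res0 c P \<longleftrightarrow> (\<exists>n e. c = pe 14 (pe n 0) \<and> nthc P 0 = pe 13 (pe n e) \<and> nthc P 1 = pe 12 (eN (encG cD0 cPR e)))"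

definition Rule :: "nat \<Rightarrow> nat \<Rightarrow> bool" where
  "Rule c P \<longleftrightarrow> R_wft_var c P \<or> R_wft_fn c P \<or> R_wftl_nil c P \<or> R_wftl_cons c P \<or> R_wff_bot c P \<or> R_wff_eq c P \<or> R_wff_rel c P \<or> R_wff_imp c P \<or> R_wff_all c P \<or> R_sh_var c P \<or> R_sh_fn c P \<or> R_shl_nil c P \<or> R_shl_cons c P \<or> R_shf_bot c P \<or> R_shf_eq c P \<or> R_shf_rel c P \<or> R_shf_imp c P \<or> R_shf_all c P \<or> R_in_var1 c P \<or> R_in_var2 c P \<or> R_in_fn c P \<or> R_inl_nil c P \<or> R_inl_cons c P \<or> R_inf_bot c P \<or> R_inf_eq c P \<or> R_inf_rel c P \<or> R_inf_imp c P \<or> R_inf_all c P \<or> R_ax1 c P \<or> R_ax2 c P \<or> R_ax3 c P \<or> R_axinst c P \<or> R_axvac c P \<or> R_axdist c P \<or> R_axrefl c P \<or> R_axleib c P \<or> R_mp c P \<or> R_gen c P \<or> R_imps0 c P \<or> R_imps1 c P \<or> R_thm c P \<or> R_t0 c P \<or> R_tS c P \<or> R_res1 c P \<or> R_res0 c P"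

lemma rpred_R_wft_var: "rpred 2 (\<lambda>xs. R_wft_var (xs ! 0) (xs ! 1))"
  unfolding R_wft_var_def by (simp add: conv_simps del: LFc_mem LRc_mem) (intro rpred_intros)

lemma rpred_R_wft_fn: "rpred 2 (\<lambda>xs. R_wft_fn (xs ! 0) (xs ! 1))"
  unfolding R_wft_fn_def by (simp add: conv_simps del: LFc_mem LRc_mem) (intro rpred_intros)

lemma rpred_R_wftl_nil: "rpred 2 (\<lambda>xs. R_wftl_nil (xs ! 0) (xs ! 1))"
  unfolding R_wftl_nil_def by (simp add: conv_simps del: LFc_mem LRc_mem) (intro rpred_intros)

lemma rpred_R_wftl_cons: "rpred 2 (\<lambda>xs. R_wftl_cons (xs ! 0) (xs ! 1))"
  unfolding R_wftl_cons_def by (simp add: conv_simps del: LFc_mem LRc_mem) (intro rpred_intros)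

lemma rpred_R_wff_bot: "rpred 2 (\<lambda>xs. R_wff_bot (xs ! 0) (xs ! 1))"
  unfolding R_wff_bot_def by (simp add: conv_simps del: LFc_mem LRc_mem) (intro rpred_intros)

lemma rpred_R_wff_eq: "rpred 2 (\<lambda>xs. R_wff_eq (xs ! 0) (xs ! 1))"
  unfolding R_wff_eq_def by (simp add: conv_simps del: LFc_mem LRc_mem) (intro rpred_intros)

lemma rpred_R_wff_rel: "rpred 2 (\<lambda>xs. R_wff_rel (xs ! 0) (xs ! 1))"
  unfolding R_wff_rel_def by (simp add: conv_simps del: LFc_mem LRc_mem) (intro rpred_intros)

lemma rpred_R_wff_imp: "rpred 2 (\<lambda>xs. R_wff_imp (xs ! 0) (xs ! 1))"
  unfolding R_wff_imp_def by (simp add: conv_simps del: LFc_mem LRc_mem) (intro rpred_intros)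

lemma rpred_R_wff_all: "rpred 2 (\<lambda>xs. R_wff_all (xs ! 0) (xs ! 1))"
  unfolding R_wff_all_def by (simp add: conv_simps del: LFc_mem LRc_mem) (intro rpred_intros)

lemma rpred_R_sh_var: "rpred 2 (\<lambda>xs. R_sh_var (xs ! 0) (xs ! 1))"
  unfolding R_sh_var_def by (simp add: conv_simps del: LFc_mem LRc_mem) (intro rpred_intros)

lemma rpred_R_sh_fn: "rpred 2 (\<lambda>xs. R_sh_fn (xs ! 0) (xs ! 1))"
  unfolding R_sh_fn_def by (simp add: conv_simps del: LFc_mem LRc_mem) (intro rpred_intros)

lemma rpred_R_shl_nil: "rpred 2 (\<lambda>xs. R_shl_nil (xs ! 0) (xs ! 1))"
  unfolding R_shl_nil_def by (simp add: conv_simps del: LFc_mem LRc_mem) (intro rpred_intros)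

lemma rpred_R_shl_cons: "rpred 2 (\<lambda>xs. R_shl_cons (xs ! 0) (xs ! 1))"
  unfolding R_shl_cons_def by (simp add: conv_simps del: LFc_mem LRc_mem) (intro rpred_intros)

lemma rpred_R_shf_bot: "rpred 2 (\<lambda>xs. R_shf_bot (xs ! 0) (xs ! 1))"
  unfolding R_shf_bot_def by (simp add: conv_simps del: LFc_mem LRc_mem) (intro rpred_intros)

lemma rpred_R_shf_eq: "rpred 2 (\<lambda>xs. R_shf_eq (xs ! 0) (xs ! 1))"
  unfolding R_shf_eq_def by (simp add: conv_simps del: LFc_mem LRc_mem) (intro rpred_intros)

lemma rpred_R_shf_rel: "rpred 2 (\<lambda>xs. R_shf_rel (xs ! 0) (xs ! 1))"
  unfolding R_shf_rel_def by (simp add: conv_simps del: LFc_mem LRc_mem) (intro rpred_intros)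

lemma rpred_R_shf_imp: "rpred 2 (\<lambda>xs. R_shf_imp (xs ! 0) (xs ! 1))"
  unfolding R_shf_imp_def by (simp add: conv_simps del: LFc_mem LRc_mem) (intro rpred_intros)

lemma rpred_R_shf_all: "rpred 2 (\<lambda>xs. R_shf_all (xs ! 0) (xs ! 1))"
  unfolding R_shf_all_def by (simp add: conv_simps del: LFc_mem LRc_mem) (intro rpred_intros)

lemma rpred_R_in_var1: "rpred 2 (\<lambda>xs. R_in_var1 (xs ! 0) (xs ! 1))"
  unfolding R_in_var1_def by (simp add: conv_simps del: LFc_mem LRc_mem) (intro rpred_intros)

lemma rpred_R_in_var2: "rpred 2 (\<lambda>xs. R_in_var2 (xs ! 0) (xs ! 1))"
  unfolding R_in_var2_def by (simp add: conv_simps del: LFc_mem LRc_mem) (intro rpred_intros)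

lemma rpred_R_in_fn: "rpred 2 (\<lambda>xs. R_in_fn (xs ! 0) (xs ! 1))"
  unfolding R_in_fn_def by (simp add: conv_simps del: LFc_mem LRc_mem) (intro rpred_intros)

lemma rpred_R_inl_nil: "rpred 2 (\<lambda>xs. R_inl_nil (xs ! 0) (xs ! 1))"
  unfolding R_inl_nil_def by (simp add: conv_simps del: LFc_mem LRc_mem) (intro rpred_intros)

lemma rpred_R_inl_cons: "rpred 2 (\<lambda>xs. R_inl_cons (xs ! 0) (xs ! 1))"
  unfolding R_inl_cons_def by (simp add: conv_simps del: LFc_mem LRc_mem) (intro rpred_intros)

lemma rpred_R_inf_bot: "rpred 2 (\<lambda>xs. R_inf_bot (xs ! 0) (xs ! 1))"
  unfolding R_inf_bot_def by (simp add: conv_simps del: LFc_mem LRc_mem) (intro rpred_intros)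

lemma rpred_R_inf_eq: "rpred 2 (\<lambda>xs. R_inf_eq (xs ! 0) (xs ! 1))"
  unfolding R_inf_eq_def by (simp add: conv_simps del: LFc_mem LRc_mem) (intro rpred_intros)

lemma rpred_R_inf_rel: "rpred 2 (\<lambda>xs. R_inf_rel (xs ! 0) (xs ! 1))"
  unfolding R_inf_rel_def by (simp add: conv_simps del: LFc_mem LRc_mem) (intro rpred_intros)

lemma rpred_R_inf_imp: "rpred 2 (\<lambda>xs. R_inf_imp (xs ! 0) (xs ! 1))"
  unfolding R_inf_imp_def by (simp add: conv_simps del: LFc_mem LRc_mem) (intro rpred_intros)

lemma rpred_R_inf_all: "rpred 2 (\<lambda>xs. R_inf_all (xs ! 0) (xs ! 1))"
  unfolding R_inf_all_def by (simp add: conv_simps del: LFc_mem LRc_mem) (intro rpred_intros)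

lemma rpred_R_ax1: "rpred 2 (\<lambda>xs. R_ax1 (xs ! 0) (xs ! 1))"
  unfolding R_ax1_def by (simp add: conv_simps del: LFc_mem LRc_mem) (intro rpred_intros)

lemma rpred_R_ax2: "rpred 2 (\<lambda>xs. R_ax2 (xs ! 0) (xs ! 1))"
  unfolding R_ax2_def by (simp add: conv_simps del: LFc_mem LRc_mem) (intro rpred_intros)

lemma rpred_R_ax3: "rpred 2 (\<lambda>xs. R_ax3 (xs ! 0) (xs ! 1))"
  unfolding R_ax3_def by (simp add: conv_simps del: LFc_mem LRc_mem) (intro rpred_intros)

lemma rpred_R_axinst: "rpred 2 (\<lambda>xs. R_axinst (xs ! 0) (xs ! 1))"
  unfolding R_axinst_def by (simp add: conv_simps del: LFc_mem LRc_mem) (intro rpred_intros)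

lemma rpred_R_axvac: "rpred 2 (\<lambda>xs. R_axvac (xs ! 0) (xs ! 1))"
  unfolding R_axvac_def by (simp add: conv_simps del: LFc_mem LRc_mem) (intro rpred_intros)

lemma rpred_R_axdist: "rpred 2 (\<lambda>xs. R_axdist (xs ! 0) (xs ! 1))"
  unfolding R_axdist_def by (simp add: conv_simps del: LFc_mem LRc_mem) (intro rpred_intros)

lemma rpred_R_axrefl: "rpred 2 (\<lambda>xs. R_axrefl (xs ! 0) (xs ! 1))"
  unfolding R_axrefl_def by (simp add: conv_simps del: LFc_mem LRc_mem) (intro rpred_intros)

lemma rpred_R_axleib: "rpred 2 (\<lambda>xs. R_axleib (xs ! 0) (xs ! 1))"
  unfolding R_axleib_def by (simp add: conv_simps del: LFc_mem LRc_mem) (intro rpred_intros)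

lemma rpred_R_mp: "rpred 2 (\<lambda>xs. R_mp (xs ! 0) (xs ! 1))"
  unfolding R_mp_def by (simp add: conv_simps del: LFc_mem LRc_mem) (intro rpred_intros)

lemma rpred_R_gen: "rpred 2 (\<lambda>xs. R_gen (xs ! 0) (xs ! 1))"
  unfolding R_gen_def by (simp add: conv_simps del: LFc_mem LRc_mem) (intro rpred_intros)

lemma rpred_R_imps0: "rpred 2 (\<lambda>xs. R_imps0 (xs ! 0) (xs ! 1))"
  unfolding R_imps0_def by (simp add: conv_simps del: LFc_mem LRc_mem) (intro rpred_intros)

lemma rpred_R_imps1: "rpred 2 (\<lambda>xs. R_imps1 (xs ! 0) (xs ! 1))"
  unfolding R_imps1_def by (simp add: conv_simps del: LFc_mem LRc_mem) (intro rpred_intros)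

lemma rpred_R_thm: "rpred 2 (\<lambda>xs. R_thm (xs ! 0) (xs ! 1))"
  unfolding R_thm_def by (simp add: conv_simps del: LFc_mem LRc_mem) (intro rpred_intros)

lemma rpred_R_t0: "rpred 2 (\<lambda>xs. R_t0 (xs ! 0) (xs ! 1))"
  unfolding R_t0_def by (simp add: conv_simps del: LFc_mem LRc_mem) (intro rpred_intros)

lemma rpred_R_tS: "rpred 2 (\<lambda>xs. R_tS (xs ! 0) (xs ! 1))"
  unfolding R_tS_def by (simp add: conv_simps del: LFc_mem LRc_mem) (intro rpred_intros)

lemma rpred_R_res1: "rpred 2 (\<lambda>xs. R_res1 (xs ! 0) (xs ! 1))"
  unfolding R_res1_def by (simp add: conv_simps del: LFc_mem LRc_mem) (intro rpred_intros)

lemma rpred_R_res0: "rpred 2 (\<lambda>xs. R_res0 (xs ! 0) (xs ! 1))"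
  unfolding R_res0_def by (simp add: conv_simps del: LFc_mem LRc_mem) (intro rpred_intros)

lemma rpred_Rule: "rpred 2 (\<lambda>xs. Rule (xs ! 0) (xs ! 1))"
  unfolding Rule_def by (intro rpred_or rpred_R_wft_var rpred_R_wft_fn rpred_R_wftl_nil rpred_R_wftl_cons rpred_R_wff_bot rpred_R_wff_eq rpred_R_wff_rel rpred_R_wff_imp rpred_R_wff_all rpred_R_sh_var rpred_R_sh_fn rpred_R_shl_nil rpred_R_shl_cons rpred_R_shf_bot rpred_R_shf_eq rpred_R_shf_rel rpred_R_shf_imp rpred_R_shf_all rpred_R_in_var1 rpred_R_in_var2 rpred_R_in_fn rpred_R_inl_nil rpred_R_inl_cons rpred_R_inf_bot rpred_R_inf_eq rpred_R_inf_rel rpred_R_inf_imp rpred_R_inf_all rpred_R_ax1 rpred_R_ax2 rpred_R_ax3 rpred_R_axinst rpred_R_axvac rpred_R_axdist rpred_R_axrefl rpred_R_axleib rpred_R_mp rpred_R_gen rpred_R_imps0 rpred_R_imps1 rpred_R_thm rpred_R_t0 rpred_R_tS rpred_R_res1 rpred_R_res0)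

definition sem :: "nat \<Rightarrow> nat \<Rightarrow> bool" where
  "sem k x \<longleftrightarrow> (if k = 1 then (\<exists>t. x = enc_tm t \<and> wf_tm L t)
    else if k = 2 then (\<exists>ts. x = pe (EL ts) (length ts) \<and> (\<forall>t\<in>set ts. wf_tm L t))
    else if k = 3 then (\<exists>p. x = enc_fm p \<and> wf_fm L p)
    else if k = 4 then (\<exists>s d t. x = q4 s d (enc_tm t) (enc_tm (subst_tm (shf s d) t)))
    else if k = 5 then (\<exists>s d ts. x = q4 s d (EL ts) (EL (map (subst_tm (shf s d)) ts)))
    else if k = 6 then (\<exists>s d p. x = q4 s d (enc_fm p) (enc_fm (subst_fm (shf s d) p)))
    else if k = 7 then (\<exists>d t a b. x = q4 d t a b \<and> (\<forall>t0. t = enc_tm t0 \<longrightarrow> (\<exists>tm. a = enc_tm tm \<and> b = enc_tm (subst_tm (sigi d t0) tm))))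
    else if k = 8 then (\<exists>d t a b. x = q4 d t a b \<and> (\<forall>t0. t = enc_tm t0 \<longrightarrow> (\<exists>ts. a = EL ts \<and> b = EL (map (subst_tm (sigi d t0)) ts))))
    else if k = 9 then (\<exists>d t a b. x = q4 d t a b \<and> (\<forall>t0. t = enc_tm t0 \<longrightarrow> (\<exists>p. a = enc_fm p \<and> b = enc_fm (subst_fm (sigi d t0) p))))
    else if k = 10 then (\<exists>p. x = enc_fm p \<and> prov L p)
    else if k = 11 then (\<exists>axs p. set axs \<subseteq> Ax \<and> x = pe (enc_fm (foldr Imp axs p)) (enc_fm p))
    else if k = 12 then (\<exists>p. x = enc_fm p \<and> thm_of (L, Ax) p)
    else if k = 13 then (\<exists>n. x = pe n (enc_fm (T n)))
    else if k = 14 then (\<exists>n. (x = pe n 1 \<and> thm_of (L, Ax) (phi n)) \<or> (x = pe n 0 \<and> thm_of (L, Ax) (Neg (phi n))))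
    else True)"

definition Sem :: "nat \<Rightarrow> bool" where "Sem c = sem (pfst c) (psnd c)"

lemma Sem_pe[simp]: "Sem (pe k x) = sem k x" by (simp add: Sem_def)

lemma sem_1[simp]: "sem 1 x \<longleftrightarrow> (\<exists>t. x = enc_tm t \<and> wf_tm L t)" by (simp add: sem_def)
lemma sem_2[simp]: "sem 2 x \<longleftrightarrow> (\<exists>ts. x = pe (EL ts) (length ts) \<and> (\<forall>t\<in>set ts. wf_tm L t))" by (simp add: sem_def)
lemma sem_3[simp]: "sem 3 x \<longleftrightarrow> (\<exists>p. x = enc_fm p \<and> wf_fm L p)" by (simp add: sem_def)
lemma sem_4[simp]: "sem 4 x \<longleftrightarrow> (\<exists>s d t. x = q4 s d (enc_tm t) (enc_tm (subst_tm (shf s d) t)))" by (simp add: sem_def)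
lemma sem_5[simp]: "sem 5 x \<longleftrightarrow> (\<exists>s d ts. x = q4 s d (EL ts) (EL (map (subst_tm (shf s d)) ts)))" by (simp add: sem_def)
lemma sem_6[simp]: "sem 6 x \<longleftrightarrow> (\<exists>s d p. x = q4 s d (enc_fm p) (enc_fm (subst_fm (shf s d) p)))" by (simp add: sem_def)
lemma sem_7[simp]: "sem 7 x \<longleftrightarrow> (\<exists>d t a b. x = q4 d t a b \<and> (\<forall>t0. t = enc_tm t0 \<longrightarrow> (\<exists>tm. a = enc_tm tm \<and> b = enc_tm (subst_tm (sigi d t0) tm))))" by (simp add: sem_def)
lemma sem_8[simp]: "sem 8 x \<longleftrightarrow> (\<exists>d t a b. x = q4 d t a b \<and> (\<forall>t0. t = enc_tm t0 \<longrightarrow> (\<exists>ts. a = EL ts \<and> b = EL (map (subst_tm (sigi d t0)) ts))))" by (simp add: sem_def)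
lemma sem_9[simp]: "sem 9 x \<longleftrightarrow> (\<exists>d t a b. x = q4 d t a b \<and> (\<forall>t0. t = enc_tm t0 \<longrightarrow> (\<exists>p. a = enc_fm p \<and> b = enc_fm (subst_fm (sigi d t0) p))))" by (simp add: sem_def)
lemma sem_10[simp]: "sem 10 x \<longleftrightarrow> (\<exists>p. x = enc_fm p \<and> prov L p)" by (simp add: sem_def)
lemma sem_11[simp]: "sem 11 x \<longleftrightarrow> (\<exists>axs p. set axs \<subseteq> Ax \<and> x = pe (enc_fm (foldr Imp axs p)) (enc_fm p))" by (simp add: sem_def)
lemma sem_12[simp]: "sem 12 x \<longleftrightarrow> (\<exists>p. x = enc_fm p \<and> thm_of (L, Ax) p)" by (simp add: sem_def)
lemma sem_13[simp]: "sem 13 x \<longleftrightarrow> (\<exists>n. x = pe n (enc_fm (T n)))" by (simp add: sem_def)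
lemma sem_14[simp]: "sem 14 x \<longleftrightarrow> (\<exists>n. (x = pe n 1 \<and> thm_of (L, Ax) (phi n)) \<or> (x = pe n 0 \<and> thm_of (L, Ax) (Neg (phi n))))" by (simp add: sem_def)
lemma sem_0[simp]: "sem 0 x" by (simp add: sem_def)
lemma sem_Suc0[simp]: "sem (Suc 0) x \<longleftrightarrow> (\<exists>t. x = enc_tm t \<and> wf_tm L t)" by (simp add: sem_def)

end


context sys
begin

lemma ax_vac'': "wf_fm L p \<Longrightarrow> prov L (Imp p (All (subst_fm (shf (Suc 0) 0) p)))"
  using ax_vac'[of L p] by simp

lemmas prov_intros = ax1 ax2 ax3' ax_inst' ax_vac' ax_vac'' ax_dist ax_refl ax_leib'

lemma sound_R_wft_var:
  assumes "R_wft_var c P" and S: "\<And>k. Sem (nthc P k)"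
  shows "Sem c"
  using assms(1) S[of 0] S[of 1] S[of 2] S[of 3] S[of 4] unfolding R_wft_var_def
  by (auto simp: enc_simps intro: prov_intros; blast intro: prov_intros prov.mp prov.gen)

lemma sound_R_wft_fn:
  assumes "R_wft_fn c P" and S: "\<And>k. Sem (nthc P k)"
  shows "Sem c"
  using assms(1) S[of 0] S[of 1] S[of 2] S[of 3] S[of 4] unfolding R_wft_fn_def
  by (auto simp: enc_simps intro: prov_intros; blast intro: prov_intros prov.mp prov.gen)

lemma sound_R_wftl_nil:
  assumes "R_wftl_nil c P" and S: "\<And>k. Sem (nthc P k)"
  shows "Sem c"
  using assms(1) S[of 0] S[of 1] S[of 2] S[of 3] S[of 4] unfolding R_wftl_nil_def
  by (auto simp: enc_simps intro: prov_intros; blast intro: prov_intros prov.mp prov.gen)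

lemma sound_R_wftl_cons:
  assumes "R_wftl_cons c P" and S: "\<And>k. Sem (nthc P k)"
  shows "Sem c"
  using assms(1) S[of 0] S[of 1] S[of 2] S[of 3] S[of 4] unfolding R_wftl_cons_def
  by (auto simp: enc_simps intro: prov_intros; blast intro: prov_intros prov.mp prov.gen)

lemma sound_R_wff_bot:
  assumes "R_wff_bot c P" and S: "\<And>k. Sem (nthc P k)"
  shows "Sem c"
  using assms(1) S[of 0] S[of 1] S[of 2] S[of 3] S[of 4] unfolding R_wff_bot_def
  by (auto simp: enc_simps intro: prov_intros; blast intro: prov_intros prov.mp prov.gen)

lemma sound_R_wff_eq:
  assumes "R_wff_eq c P" and S: "\<And>k. Sem (nthc P k)"
  shows "Sem c"
  using assms(1) S[of 0] S[of 1] S[of 2] S[of 3] S[of 4] unfolding R_wff_eq_def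
  by (auto simp: enc_simps intro: prov_intros; blast intro: prov_intros prov.mp prov.gen)

lemma sound_R_wff_rel:
  assumes "R_wff_rel c P" and S: "\<And>k. Sem (nthc P k)"
  shows "Sem c"
  using assms(1) S[of 0] S[of 1] S[of 2] S[of 3] S[of 4] unfolding R_wff_rel_def
  by (auto simp: enc_simps intro: prov_intros; blast intro: prov_intros prov.mp prov.gen)

lemma sound_R_wff_imp:
  assumes "R_wff_imp c P" and S: "\<And>k. Sem (nthc P k)"
  shows "Sem c"
  using assms(1) S[of 0] S[of 1] S[of 2] S[of 3] S[of 4] unfolding R_wff_imp_def
  by (auto simp: enc_simps intro: prov_intros; blast intro: prov_intros prov.mp prov.gen)

lemma sound_R_wff_all:
  assumes "R_wff_all c P" and S: "\<And>k. Sem (nthc P k)"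
  shows "Sem c"
  using assms(1) S[of 0] S[of 1] S[of 2] S[of 3] S[of 4] unfolding R_wff_all_def
  by (auto simp: enc_simps intro: prov_intros; blast intro: prov_intros prov.mp prov.gen)

lemma sound_R_sh_var:
  assumes "R_sh_var c P" and S: "\<And>k. Sem (nthc P k)"
  shows "Sem c"
  using assms(1) S[of 0] S[of 1] S[of 2] S[of 3] S[of 4] unfolding R_sh_var_def
  by (auto simp: enc_simps intro: prov_intros; blast intro: prov_intros prov.mp prov.gen)

lemma sound_R_sh_fn:
  assumes "R_sh_fn c P" and S: "\<And>k. Sem (nthc P k)"
  shows "Sem c"
  using assms(1) S[of 0] S[of 1] S[of 2] S[of 3] S[of 4] unfolding R_sh_fn_def
  by (auto simp: enc_simps intro: prov_intros; blast intro: prov_intros prov.mp prov.gen)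

lemma sound_R_shl_nil:
  assumes "R_shl_nil c P" and S: "\<And>k. Sem (nthc P k)"
  shows "Sem c"
  using assms(1) S[of 0] S[of 1] S[of 2] S[of 3] S[of 4] unfolding R_shl_nil_def
  by (auto simp: enc_simps intro: prov_intros; blast intro: prov_intros prov.mp prov.gen)

lemma sound_R_shl_cons:
  assumes "R_shl_cons c P" and S: "\<And>k. Sem (nthc P k)"
  shows "Sem c"
  using assms(1) S[of 0] S[of 1] S[of 2] S[of 3] S[of 4] unfolding R_shl_cons_def
  by (auto simp: enc_simps intro: prov_intros; blast intro: prov_intros prov.mp prov.gen)

lemma sound_R_shf_bot:
  assumes "R_shf_bot c P" and S: "\<And>k. Sem (nthc P k)"
  shows "Sem c"
  using assms(1) S[of 0] S[of 1] S[of 2] S[of 3] S[of 4] unfolding R_shf_bot_def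
  by (auto simp: enc_simps intro: prov_intros; blast intro: prov_intros prov.mp prov.gen)

lemma sound_R_shf_eq:
  assumes "R_shf_eq c P" and S: "\<And>k. Sem (nthc P k)"
  shows "Sem c"
  using assms(1) S[of 0] S[of 1] S[of 2] S[of 3] S[of 4] unfolding R_shf_eq_def
  by (auto simp: enc_simps intro: prov_intros; blast intro: prov_intros prov.mp prov.gen)

lemma sound_R_shf_rel:
  assumes "R_shf_rel c P" and S: "\<And>k. Sem (nthc P k)"
  shows "Sem c"
  using assms(1) S[of 0] S[of 1] S[of 2] S[of 3] S[of 4] unfolding R_shf_rel_def
  by (auto simp: enc_simps intro: prov_intros; blast intro: prov_intros prov.mp prov.gen)

lemma sound_R_shf_imp:
  assumes "R_shf_imp c P" and S: "\<And>k. Sem (nthc P k)"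
  shows "Sem c"
  using assms(1) S[of 0] S[of 1] S[of 2] S[of 3] S[of 4] unfolding R_shf_imp_def
  by (auto simp: enc_simps intro: prov_intros; blast intro: prov_intros prov.mp prov.gen)

lemma sound_R_shf_all:
  assumes "R_shf_all c P" and S: "\<And>k. Sem (nthc P k)"
  shows "Sem c"
  using assms(1) S[of 0] S[of 1] S[of 2] S[of 3] S[of 4] unfolding R_shf_all_def
  by (auto simp: enc_simps intro: prov_intros; blast intro: prov_intros prov.mp prov.gen)

lemma sound_R_in_var1:
  assumes "R_in_var1 c P" and S: "\<And>k. Sem (nthc P k)"
  shows "Sem c"
  using assms(1) S[of 0] S[of 1] S[of 2] S[of 3] S[of 4] unfolding R_in_var1_def
  by (auto simp: enc_simps intro: prov_intros; blast intro: prov_intros prov.mp prov.gen)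

lemma sound_R_in_var2:
  assumes "R_in_var2 c P" and S: "\<And>k. Sem (nthc P k)"
  shows "Sem c"
  using assms(1) S[of 0] S[of 1] S[of 2] S[of 3] S[of 4] unfolding R_in_var2_def
  by (auto simp: enc_simps intro: prov_intros; blast intro: prov_intros prov.mp prov.gen)

lemma sound_R_in_fn:
  assumes "R_in_fn c P" and S: "\<And>k. Sem (nthc P k)"
  shows "Sem c"
  using assms(1) S[of 0] S[of 1] S[of 2] S[of 3] S[of 4] unfolding R_in_fn_def
  by (auto simp: enc_simps intro: prov_intros; blast intro: prov_intros prov.mp prov.gen)

lemma sound_R_inl_nil:
  assumes "R_inl_nil c P" and S: "\<And>k. Sem (nthc P k)"
  shows "Sem c"
  using assms(1) S[of 0] S[of 1] S[of 2] S[of 3] S[of 4] unfolding R_inl_nil_def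
  by (auto simp: enc_simps intro: prov_intros; blast intro: prov_intros prov.mp prov.gen)

lemma sound_R_inl_cons:
  assumes "R_inl_cons c P" and S: "\<And>k. Sem (nthc P k)"
  shows "Sem c"
  using assms(1) S[of 0] S[of 1] S[of 2] S[of 3] S[of 4] unfolding R_inl_cons_def
  by (auto simp: enc_simps intro: prov_intros; blast intro: prov_intros prov.mp prov.gen)

lemma sound_R_inf_bot:
  assumes "R_inf_bot c P" and S: "\<And>k. Sem (nthc P k)"
  shows "Sem c"
  using assms(1) S[of 0] S[of 1] S[of 2] S[of 3] S[of 4] unfolding R_inf_bot_def
  by (auto simp: enc_simps intro: prov_intros; blast intro: prov_intros prov.mp prov.gen)

lemma sound_R_inf_eq:
  assumes "R_inf_eq c P" and S: "\<And>k. Sem (nthc P k)"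
  shows "Sem c"
  using assms(1) S[of 0] S[of 1] S[of 2] S[of 3] S[of 4] unfolding R_inf_eq_def
  by (auto simp: enc_simps intro: prov_intros; blast intro: prov_intros prov.mp prov.gen)

lemma sound_R_inf_rel:
  assumes "R_inf_rel c P" and S: "\<And>k. Sem (nthc P k)"
  shows "Sem c"
  using assms(1) S[of 0] S[of 1] S[of 2] S[of 3] S[of 4] unfolding R_inf_rel_def
  by (auto simp: enc_simps intro: prov_intros; blast intro: prov_intros prov.mp prov.gen)

lemma sound_R_inf_imp:
  assumes "R_inf_imp c P" and S: "\<And>k. Sem (nthc P k)"
  shows "Sem c"
  using assms(1) S[of 0] S[of 1] S[of 2] S[of 3] S[of 4] unfolding R_inf_imp_def
  by (auto simp: enc_simps intro: prov_intros; blast intro: prov_intros prov.mp prov.gen)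

lemma sound_R_inf_all:
  assumes "R_inf_all c P" and S: "\<And>k. Sem (nthc P k)"
  shows "Sem c"
  using assms(1) S[of 0] S[of 1] S[of 2] S[of 3] S[of 4] unfolding R_inf_all_def
  by (auto simp: enc_simps intro: prov_intros; blast intro: prov_intros prov.mp prov.gen)

lemma sound_R_ax1:
  assumes "R_ax1 c P" and S: "\<And>k. Sem (nthc P k)"
  shows "Sem c"
  using assms(1) S[of 0] S[of 1] S[of 2] S[of 3] S[of 4] unfolding R_ax1_def
  by (auto simp: enc_simps intro: prov_intros; blast intro: prov_intros prov.mp prov.gen)

lemma sound_R_ax2:
  assumes "R_ax2 c P" and S: "\<And>k. Sem (nthc P k)"
  shows "Sem c"
  using assms(1) S[of 0] S[of 1] S[of 2] S[of 3] S[of 4] unfolding R_ax2_def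
  by (auto simp: enc_simps intro: prov_intros; blast intro: prov_intros prov.mp prov.gen)

lemma sound_R_ax3:
  assumes "R_ax3 c P" and S: "\<And>k. Sem (nthc P k)"
  shows "Sem c"
  using assms(1) S[of 0] S[of 1] S[of 2] S[of 3] S[of 4] unfolding R_ax3_def
  by (auto simp: enc_simps intro: prov_intros; blast intro: prov_intros prov.mp prov.gen)

lemma sound_R_axinst:
  assumes "R_axinst c P" and S: "\<And>k. Sem (nthc P k)"
  shows "Sem c"
  using assms(1) S[of 0] S[of 1] S[of 2] S[of 3] S[of 4] unfolding R_axinst_def
  by (auto simp: enc_simps intro: prov_intros; blast intro: prov_intros prov.mp prov.gen)

lemma sound_R_axvac:
  assumes "R_axvac c P" and S: "\<And>k. Sem (nthc P k)"
  shows "Sem c"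
  using assms(1) S[of 0] S[of 1] S[of 2] S[of 3] S[of 4] unfolding R_axvac_def
  by (auto simp: enc_simps intro: prov_intros; blast intro: prov_intros prov.mp prov.gen)

lemma sound_R_axdist:
  assumes "R_axdist c P" and S: "\<And>k. Sem (nthc P k)"
  shows "Sem c"
  using assms(1) S[of 0] S[of 1] S[of 2] S[of 3] S[of 4] unfolding R_axdist_def
  by (auto simp: enc_simps intro: prov_intros; blast intro: prov_intros prov.mp prov.gen)

lemma sound_R_axrefl:
  assumes "R_axrefl c P" and S: "\<And>k. Sem (nthc P k)"
  shows "Sem c"
  using assms(1) S[of 0] S[of 1] S[of 2] S[of 3] S[of 4] unfolding R_axrefl_def
  by (auto simp: enc_simps intro: prov_intros; blast intro: prov_intros prov.mp prov.gen)

lemma sound_R_axleib: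
  assumes "R_axleib c P" and S: "\<And>k. Sem (nthc P k)"
  shows "Sem c"
  using assms(1) S[of 0] S[of 1] S[of 2] S[of 3] S[of 4] unfolding R_axleib_def
  by (auto simp: enc_simps intro: prov_intros; blast intro: prov_intros prov.mp prov.gen)

lemma sound_R_mp:
  assumes "R_mp c P" and S: "\<And>k. Sem (nthc P k)"
  shows "Sem c"
  using assms(1) S[of 0] S[of 1] S[of 2] S[of 3] S[of 4] unfolding R_mp_def
  by (auto simp: enc_simps intro: prov_intros; blast intro: prov_intros prov.mp prov.gen)

lemma sound_R_gen:
  assumes "R_gen c P" and S: "\<And>k. Sem (nthc P k)"
  shows "Sem c"
  using assms(1) S[of 0] S[of 1] S[of 2] S[of 3] S[of 4] unfolding R_gen_def
  by (auto simp: enc_simps intro: prov_intros; blast intro: prov_intros prov.mp prov.gen)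

lemma sound_R_imps0:
  assumes "R_imps0 c P" and S: "\<And>k. Sem (nthc P k)"
  shows "Sem c"
  proof -
  from assms(1) obtain p where c: "c = pe 11 (pe p p)" and p0: "nthc P 0 = pe 3 p"
    unfolding R_imps0_def by blast
  from S[of 0] p0 obtain pp where pp: "p = enc_fm pp" by auto
  show ?thesis using pp unfolding c
    by (simp only: Sem_pe sem_11) (rule exI[of _ "[]"], rule exI[of _ pp], simp)
qed

lemma sound_R_imps1:
  assumes "R_imps1 c P" and S: "\<And>k. Sem (nthc P k)"
  shows "Sem c"
  proof -
  from assms(1) obtain a q p where c: "c = pe 11 (pe (eI a q) p)" and p0: "nthc P 0 = pe 11 (pe q p)" and a: "a \<in> AXc'"
    unfolding R_imps1_def by blast
  from S[of 0] p0 obtain axs p' where "set axs \<subseteq> Ax" "q = enc_fm (foldr Imp axs p')" "p = enc_fm p'" by auto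
  moreover from a obtain ax where "ax \<in> Ax" "a = enc_fm ax" by (auto simp: AXc_def)
  ultimately show ?thesis unfolding c
    by (simp, intro exI[of _ "ax # axs"] exI[of _ p']) auto
qed

lemma sound_R_thm:
  assumes "R_thm c P" and S: "\<And>k. Sem (nthc P k)"
  shows "Sem c"
  proof -
  from assms(1) obtain p q where c: "c = pe 12 p" and p0: "nthc P 0 = pe 10 q" and p1: "nthc P 1 = pe 11 (pe q p)"
    unfolding R_thm_def by blast
  from S[of 0] p0 obtain qq where qq: "q = enc_fm qq" "prov L qq" by auto
  from S[of 1] p1 obtain axs p' where ax: "set axs \<subseteq> Ax" "q = enc_fm (foldr Imp axs p')" "p = enc_fm p'" by auto
  have "thm_of (L, Ax) p'" unfolding thm_of_def using qq ax by auto
  then show ?thesis unfolding c using ax by auto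
qed

lemma sound_R_t0:
  assumes "R_t0 c P" and S: "\<And>k. Sem (nthc P k)"
  shows "Sem c"
  using assms(1) T0[symmetric] unfolding R_t0_def by auto

lemma sound_R_tS:
  assumes "R_tS c P" and S: "\<And>k. Sem (nthc P k)"
  shows "Sem c"
  proof -
  from assms(1) obtain n e where c: "c = pe 13 (pe (Suc n) (encG cD0 cP1 e))" and p0: "nthc P 0 = pe 13 (pe n e)"
    unfolding R_tS_def by blast
  from S[of 0] p0 have e: "e = enc_fm (T n)" by auto
  have "pe (Suc n) (encG cD0 cP1 e) = pe (Suc n) (enc_fm (T (Suc n)))" using TS[of n] e by simp
  then show ?thesis unfolding c by (simp only: Sem_pe sem_13) blast
qed

lemma sound_R_res1:
  assumes "R_res1 c P" and S: "\<And>k. Sem (nthc P k)"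
  shows "Sem c"
  proof -
  from assms(1) obtain n e where c: "c = pe 14 (pe n 1)" and p0: "nthc P 0 = pe 13 (pe n e)"
     and p1: "nthc P 1 = pe 12 (encG cD0 cPR e)"
    unfolding R_res1_def by blast
  from S[of 0] p0 have "e = enc_fm (T n)" by auto
  then have "encG cD0 cPR e = enc_fm (phi n)" using phiE[of n] by simp
  then have "thm_of (L, Ax) (phi n)" using S[of 1] p1 by auto
  then show ?thesis unfolding c by auto
qed

lemma sound_R_res0:
  assumes "R_res0 c P" and S: "\<And>k. Sem (nthc P k)"
  shows "Sem c"
  proof -
  from assms(1) obtain n e where c: "c = pe 14 (pe n 0)" and p0: "nthc P 0 = pe 13 (pe n e)"
     and p1: "nthc P 1 = pe 12 (eN (encG cD0 cPR e))"
    unfolding R_res0_def by blast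
  from S[of 0] p0 have "e = enc_fm (T n)" by auto
  then have "eN (encG cD0 cPR e) = enc_fm (Neg (phi n))" using phiE[of n] by (simp add: Neg_def)
  then have "thm_of (L, Ax) (Neg (phi n))" using S[of 1] p1 by auto
  then show ?thesis unfolding c by auto
qed

lemma sound_Rule: "Rule c P \<Longrightarrow> (\<And>k. Sem (nthc P k)) \<Longrightarrow> Sem c"
  unfolding Rule_def by (elim disjE) (erule sound_R_wft_var, assumption, erule sound_R_wft_fn, assumption, erule sound_R_wftl_nil, assumption, erule sound_R_wftl_cons, assumption, erule sound_R_wff_bot, assumption, erule sound_R_wff_eq, assumption, erule sound_R_wff_rel, assumption, erule sound_R_wff_imp, assumption, erule sound_R_wff_all, assumption, erule sound_R_sh_var, assumption, erule sound_R_sh_fn, assumption, erule sound_R_shl_nil, assumption, erule sound_R_shl_cons, assumption, erule sound_R_shf_bot, assumption, erule sound_R_shf_eq, assumption, erule sound_R_shf_rel, assumption, erule sound_R_shf_imp, assumption, erule sound_R_shf_all, assumption, erule sound_R_in_var1, assumption, erule sound_R_in_var2, assumption, erule sound_R_in_fn, assumption, erule sound_R_inl_nil, assumption, erule sound_R_inl_cons, assumption, erule sound_R_inf_bot, assumption, erule sound_R_inf_eq, assumption, erule sound_R_inf_rel, assumption, erule sound_R_inf_imp, assumption, erule sound_R_inf_all, assumption, erule sound_R_ax1, assumption, erule sound_R_ax2, assumption, erule sound_R_ax3, assumption, erule sound_R_axinst, assumption, erule sound_R_axvac, assumption, erule sound_R_axdist, assumption, erule sound_R_axrefl, assumption, erule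 sound_R_axleib, assumption, erule sound_R_mp, assumption, erule sound_R_gen, assumption, erule sound_R_imps0, assumption, erule sound_R_imps1, assumption, erule sound_R_thm, assumption, erule sound_R_t0, assumption, erule sound_R_tS, assumption, erule sound_R_res1, assumption, erule sound_R_res0, assumption)

lemma sound: "Dv Rule c \<Longrightarrow> Sem c"
proof (induction rule: Dv.induct)
  case Dv0
  then show ?case by (simp add: Sem_def)
next
  case (Dvs P c)
  then show ?case using sound_Rule by blast
qed

end


context sys
begin

lemma RI_wft_var: "R_wft_var c P \<Longrightarrow> Rule c P" unfolding Rule_def by blast
lemma RI_wft_fn: "R_wft_fn c P \<Longrightarrow> Rule c P" unfolding Rule_def by blast
lemma RI_wftl_nil: "R_wftl_nil c P \<Longrightarrow> Rule c P" unfolding Rule_def by blast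
lemma RI_wftl_cons: "R_wftl_cons c P \<Longrightarrow> Rule c P" unfolding Rule_def by blast
lemma RI_wff_bot: "R_wff_bot c P \<Longrightarrow> Rule c P" unfolding Rule_def by blast
lemma RI_wff_eq: "R_wff_eq c P \<Longrightarrow> Rule c P" unfolding Rule_def by blast
lemma RI_wff_rel: "R_wff_rel c P \<Longrightarrow> Rule c P" unfolding Rule_def by blast
lemma RI_wff_imp: "R_wff_imp c P \<Longrightarrow> Rule c P" unfolding Rule_def by blast
lemma RI_wff_all: "R_wff_all c P \<Longrightarrow> Rule c P" unfolding Rule_def by blast
lemma RI_sh_var: "R_sh_var c P \<Longrightarrow> Rule c P" unfolding Rule_def by blast
lemma RI_sh_fn: "R_sh_fn c P \<Longrightarrow> Rule c P" unfolding Rule_def by blast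
lemma RI_shl_nil: "R_shl_nil c P \<Longrightarrow> Rule c P" unfolding Rule_def by blast
lemma RI_shl_cons: "R_shl_cons c P \<Longrightarrow> Rule c P" unfolding Rule_def by blast
lemma RI_shf_bot: "R_shf_bot c P \<Longrightarrow> Rule c P" unfolding Rule_def by blast
lemma RI_shf_eq: "R_shf_eq c P \<Longrightarrow> Rule c P" unfolding Rule_def by blast
lemma RI_shf_rel: "R_shf_rel c P \<Longrightarrow> Rule c P" unfolding Rule_def by blast
lemma RI_shf_imp: "R_shf_imp c P \<Longrightarrow> Rule c P" unfolding Rule_def by blast
lemma RI_shf_all: "R_shf_all c P \<Longrightarrow> Rule c P" unfolding Rule_def by blast
lemma RI_in_var1: "R_in_var1 c P \<Longrightarrow> Rule c P" unfolding Rule_def by blast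
lemma RI_in_var2: "R_in_var2 c P \<Longrightarrow> Rule c P" unfolding Rule_def by blast
lemma RI_in_fn: "R_in_fn c P \<Longrightarrow> Rule c P" unfolding Rule_def by blast
lemma RI_inl_nil: "R_inl_nil c P \<Longrightarrow> Rule c P" unfolding Rule_def by blast
lemma RI_inl_cons: "R_inl_cons c P \<Longrightarrow> Rule c P" unfolding Rule_def by blast
lemma RI_inf_bot: "R_inf_bot c P \<Longrightarrow> Rule c P" unfolding Rule_def by blast
lemma RI_inf_eq: "R_inf_eq c P \<Longrightarrow> Rule c P" unfolding Rule_def by blast
lemma RI_inf_rel: "R_inf_rel c P \<Longrightarrow> Rule c P" unfolding Rule_def by blast
lemma RI_inf_imp: "R_inf_imp c P \<Longrightarrow> Rule c P" unfolding Rule_def by blast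
lemma RI_inf_all: "R_inf_all c P \<Longrightarrow> Rule c P" unfolding Rule_def by blast
lemma RI_ax1: "R_ax1 c P \<Longrightarrow> Rule c P" unfolding Rule_def by blast
lemma RI_ax2: "R_ax2 c P \<Longrightarrow> Rule c P" unfolding Rule_def by blast
lemma RI_ax3: "R_ax3 c P \<Longrightarrow> Rule c P" unfolding Rule_def by blast
lemma RI_axinst: "R_axinst c P \<Longrightarrow> Rule c P" unfolding Rule_def by blast
lemma RI_axvac: "R_axvac c P \<Longrightarrow> Rule c P" unfolding Rule_def by blast
lemma RI_axdist: "R_axdist c P \<Longrightarrow> Rule c P" unfolding Rule_def by blast
lemma RI_axrefl: "R_axrefl c P \<Longrightarrow> Rule c P" unfolding Rule_def by blast
lemma RI_axleib: "R_axleib c P \<Longrightarrow> Rule c P" unfolding Rule_def by blast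
lemma RI_mp: "R_mp c P \<Longrightarrow> Rule c P" unfolding Rule_def by blast
lemma RI_gen: "R_gen c P \<Longrightarrow> Rule c P" unfolding Rule_def by blast
lemma RI_imps0: "R_imps0 c P \<Longrightarrow> Rule c P" unfolding Rule_def by blast
lemma RI_imps1: "R_imps1 c P \<Longrightarrow> Rule c P" unfolding Rule_def by blast
lemma RI_thm: "R_thm c P \<Longrightarrow> Rule c P" unfolding Rule_def by blast
lemma RI_t0: "R_t0 c P \<Longrightarrow> Rule c P" unfolding Rule_def by blast
lemma RI_tS: "R_tS c P \<Longrightarrow> Rule c P" unfolding Rule_def by blast
lemma RI_res1: "R_res1 c P \<Longrightarrow> Rule c P" unfolding Rule_def by blast
lemma RI_res0: "R_res0 c P \<Longrightarrow> Rule c P" unfolding Rule_def by blast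

lemma nthc_cons_simp[simp]: "nthc (Suc (pe x y)) k = (if k = 0 then x else nthc y (k - 1))"
  by (cases k) (simp add: nthc_def, simp add: nthc_Suc)

lemma DvI: "Rule c (list_encode ps) \<Longrightarrow> \<forall>x\<in>set ps. Dv Rule x \<Longrightarrow> Dv Rule c"
proof (rule Dvs)
  assume "\<forall>x\<in>set ps. Dv Rule x"
  then show "\<forall>k. Dv Rule (nthc (list_encode ps) k)"
    by (auto simp: nthc_list intro: Dv0)
qed

lemma C_wftl: "\<forall>t\<in>set ts. Dv Rule (pe 1 (enc_tm t)) \<Longrightarrow> Dv Rule (pe 2 (pe (EL ts) (length ts)))"
proof (induction ts)
  case Nil
  show ?case by (rule DvI[where ps="[]"], rule RI_wftl_nil) (auto simp: R_wftl_nil_def)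
next
  case (Cons t ts)
  show ?case
    by (rule DvI[where ps="[pe 1 (enc_tm t), pe 2 (pe (EL ts) (length ts))]"], rule RI_wftl_cons)
       (use Cons in \<open>auto simp: R_wftl_cons_def nthc_list\<close>)
qed

lemma C_wft: "wf_tm L t \<Longrightarrow> Dv Rule (pe 1 (enc_tm t))"
proof (induction t)
  case (Var i)
  show ?case by (rule DvI[where ps="[]"], rule RI_wft_var) (auto simp: R_wft_var_def)
next
  case (Fn f ts)
  have "Dv Rule (pe 2 (pe (EL ts) (length ts)))" using Fn by (intro C_wftl) auto
  then show ?case
    by (intro DvI[where ps="[pe 2 (pe (EL ts) (length ts))]"] RI_wft_fn)
       (use Fn in \<open>auto simp: R_wft_fn_def nthc_list\<close>)
qed

lemma C_wft': "wf_tm L t \<Longrightarrow> Dv Rule (pe (Suc 0) (enc_tm t))"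
  using C_wft by simp

lemma C_wff: "wf_fm L p \<Longrightarrow> Dv Rule (pe 3 (enc_fm p))"
proof (induction p)
  case Bot
  show ?case by (rule DvI[where ps="[]"], rule RI_wff_bot) (auto simp: R_wff_bot_def)
next
  case (Eq s t)
  then show ?case
    by (-, intro DvI[where ps="[pe 1 (enc_tm s), pe 1 (enc_tm t)]"] RI_wff_eq, auto simp: R_wff_eq_def nthc_list intro: C_wft C_wft')
next
  case (Rel r ts)
  have "Dv Rule (pe 2 (pe (EL ts) (length ts)))" using Rel by (intro C_wftl) (auto intro: C_wft C_wft')
  then show ?case
    by (intro DvI[where ps="[pe 2 (pe (EL ts) (length ts))]"] RI_wff_rel)
       (use Rel in \<open>auto simp: R_wff_rel_def nthc_list\<close>)
next
  case (Imp p q)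
  then show ?case
    by (-, intro DvI[where ps="[pe 3 (enc_fm p), pe 3 (enc_fm q)]"] RI_wff_imp, auto simp: R_wff_imp_def nthc_list)
next
  case (All p)
  then show ?case
    by (-, intro DvI[where ps="[pe 3 (enc_fm p)]"] RI_wff_all, auto simp: R_wff_all_def nthc_list)
qed

lemma C_shl: "\<forall>t\<in>set ts. Dv Rule (pe 4 (q4 s d (enc_tm t) (enc_tm (subst_tm (shf s d) t)))) \<Longrightarrow>
   Dv Rule (pe 5 (q4 s d (EL ts) (EL (map (subst_tm (shf s d)) ts))))"
proof (induction ts)
  case Nil
  show ?case by (rule DvI[where ps="[]"], rule RI_shl_nil) (auto simp: R_shl_nil_def)
next
  case (Cons t ts)
  show ?case
    by (rule DvI[where ps="[pe 4 (q4 s d (enc_tm t) (enc_tm (subst_tm (shf s d) t))),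
            pe 5 (q4 s d (EL ts) (EL (map (subst_tm (shf s d)) ts)))]"], rule RI_shl_cons)
       (use Cons in \<open>auto simp: R_shl_cons_def nthc_list\<close>)
qed

lemma C_sh: "Dv Rule (pe 4 (q4 s d (enc_tm t) (enc_tm (subst_tm (shf s d) t))))"
proof (induction t)
  case (Var i)
  show ?case by (rule DvI[where ps="[]"], rule RI_sh_var) (auto simp: R_sh_var_def shf_def)
next
  case (Fn f ts)
  have "Dv Rule (pe 5 (q4 s d (EL ts) (EL (map (subst_tm (shf s d)) ts))))" using Fn by (intro C_shl) auto
  then show ?case
    by (-, intro DvI[where ps="[pe 5 (q4 s d (EL ts) (EL (map (subst_tm (shf s d)) ts)))]"] RI_sh_fn, auto simp: R_sh_fn_def nthc_list)
qed

lemma C_shf: "Dv Rule (pe 6 (q4 s d (enc_fm p) (enc_fm (subst_fm (shf s d) p))))"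
proof (induction p arbitrary: d)
  case Bot
  show ?case by (rule DvI[where ps="[]"], rule RI_shf_bot) (auto simp: R_shf_bot_def)
next
  case (Eq a b)
  show ?case
    by (intro DvI[where ps="[pe 4 (q4 s d (enc_tm a) (enc_tm (subst_tm (shf s d) a))),
          pe 4 (q4 s d (enc_tm b) (enc_tm (subst_tm (shf s d) b)))]"] RI_shf_eq)
       (auto simp: R_shf_eq_def nthc_list intro: C_sh)
next
  case (Rel r ts)
  have "Dv Rule (pe 5 (q4 s d (EL ts) (EL (map (subst_tm (shf s d)) ts))))" by (intro C_shl) (auto intro: C_sh)
  then show ?case
    by (-, intro DvI[where ps="[pe 5 (q4 s d (EL ts) (EL (map (subst_tm (shf s d)) ts)))]"] RI_shf_rel, auto simp: R_shf_rel_def nthc_list)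
next
  case (Imp p q)
  show ?case
    by (intro DvI[where ps="[pe 6 (q4 s d (enc_fm p) (enc_fm (subst_fm (shf s d) p))),
          pe 6 (q4 s d (enc_fm q) (enc_fm (subst_fm (shf s d) q)))]"] RI_shf_imp)
       (auto simp: R_shf_imp_def nthc_list intro: Imp.IH)
next
  case (All p)
  show ?case
    by (intro DvI[where ps="[pe 6 (q4 s (Suc d) (enc_fm p) (enc_fm (subst_fm (shf s (Suc d)) p)))]"] RI_shf_all)
       (auto simp: R_shf_all_def nthc_list up_shf intro: All.IH)
qed

lemma C_inl: "\<forall>t\<in>set ts. Dv Rule (pe 7 (q4 d (enc_tm t0) (enc_tm t) (enc_tm (subst_tm (sigi d t0) t)))) \<Longrightarrow>
   Dv Rule (pe 8 (q4 d (enc_tm t0) (EL ts) (EL (map (subst_tm (sigi d t0)) ts))))"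
proof (induction ts)
  case Nil
  show ?case by (rule DvI[where ps="[]"], rule RI_inl_nil) (auto simp: R_inl_nil_def)
next
  case (Cons t ts)
  show ?case
    by (rule DvI[where ps="[pe 7 (q4 d (enc_tm t0) (enc_tm t) (enc_tm (subst_tm (sigi d t0) t))),
            pe 8 (q4 d (enc_tm t0) (EL ts) (EL (map (subst_tm (sigi d t0)) ts)))]"], rule RI_inl_cons)
       (use Cons in \<open>auto simp: R_inl_cons_def nthc_list\<close>)
qed

lemma C_in: "Dv Rule (pe 7 (q4 d (enc_tm t0) (enc_tm t) (enc_tm (subst_tm (sigi d t0) t))))"
proof (induction t)
  case (Var i)
  show ?case
  proof (cases "i = d")
    case True
    have "Dv Rule (pe 4 (q4 d 0 (enc_tm t0) (enc_tm (subst_tm (shf d 0) t0))))" by (rule C_sh)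
    then show ?thesis
      by (intro DvI[where ps="[pe 4 (q4 d 0 (enc_tm t0) (enc_tm (subst_tm (shf d 0) t0)))]"] RI_in_var2)
         (use True in \<open>auto simp: R_in_var2_def nthc_list sigi_def\<close>)
  next
    case False
    then show ?thesis
      by (intro DvI[where ps="[]"] RI_in_var1) (auto simp: R_in_var1_def sigi_def)
  qed
next
  case (Fn f ts)
  have "Dv Rule (pe 8 (q4 d (enc_tm t0) (EL ts) (EL (map (subst_tm (sigi d t0)) ts))))" using Fn by (intro C_inl) auto
  then show ?case
    by (-, intro DvI[where ps="[pe 8 (q4 d (enc_tm t0) (EL ts) (EL (map (subst_tm (sigi d t0)) ts)))]"] RI_in_fn, auto simp: R_in_fn_def nthc_list)
qed

lemma C_inf: "Dv Rule (pe 9 (q4 d (enc_tm t0) (enc_fm p) (enc_fm (subst_fm (sigi d t0) p))))"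
proof (induction p arbitrary: d)
  case Bot
  show ?case by (rule DvI[where ps="[]"], rule RI_inf_bot) (auto simp: R_inf_bot_def)
next
  case (Eq a b)
  show ?case
    by (intro DvI[where ps="[pe 7 (q4 d (enc_tm t0) (enc_tm a) (enc_tm (subst_tm (sigi d t0) a))),
          pe 7 (q4 d (enc_tm t0) (enc_tm b) (enc_tm (subst_tm (sigi d t0) b)))]"] RI_inf_eq)
       (auto simp: R_inf_eq_def nthc_list intro: C_in)
next
  case (Rel r ts)
  have "Dv Rule (pe 8 (q4 d (enc_tm t0) (EL ts) (EL (map (subst_tm (sigi d t0)) ts))))" by (intro C_inl) (auto intro: C_in)
  then show ?case
    by (-, intro DvI[where ps="[pe 8 (q4 d (enc_tm t0) (EL ts) (EL (map (subst_tm (sigi d t0)) ts)))]"] RI_inf_rel, auto simp: R_inf_rel_def nthc_list)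
next
  case (Imp p q)
  show ?case
    by (intro DvI[where ps="[pe 9 (q4 d (enc_tm t0) (enc_fm p) (enc_fm (subst_fm (sigi d t0) p))),
          pe 9 (q4 d (enc_tm t0) (enc_fm q) (enc_fm (subst_fm (sigi d t0) q)))]"] RI_inf_imp)
       (auto simp: R_inf_imp_def nthc_list intro: Imp.IH)
next
  case (All p)
  show ?case
    by (intro DvI[where ps="[pe 9 (q4 (Suc d) (enc_tm t0) (enc_fm p) (enc_fm (subst_fm (sigi (Suc d) t0) p)))]"] RI_inf_all)
       (auto simp: R_inf_all_def nthc_list up_sigi intro: All.IH)
qed

lemma C_prov: "prov L p \<Longrightarrow> Dv Rule (pe 10 (enc_fm p))"
proof (induction rule: prov.induct)
  case (ax1 p q)
  then show ?case
    by (-, intro DvI[where ps="[pe 3 (enc_fm p), pe 3 (enc_fm q)]"] RI_ax1, auto simp: R_ax1_def nthc_list intro: C_wff)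
next
  case (ax2 p q r)
  then show ?case
    by (-, intro DvI[where ps="[pe 3 (enc_fm p), pe 3 (enc_fm q), pe 3 (enc_fm r)]"] RI_ax2, auto simp: R_ax2_def nthc_list intro: C_wff)
next
  case (ax3 p)
  then show ?case
    by (-, intro DvI[where ps="[pe 3 (enc_fm p)]"] RI_ax3, auto simp: R_ax3_def nthc_list Neg_def intro: C_wff)
next
  case (ax_inst p t)
  then show ?case unfolding inst_sigi
    by (intro DvI[where ps="[pe 3 (enc_fm p), pe 1 (enc_tm t),
          pe 9 (q4 0 (enc_tm t) (enc_fm p) (enc_fm (subst_fm (sigi 0 t) p)))]"] RI_axinst)
       (auto simp: R_axinst_def nthc_list intro: C_wff C_wft C_wft' C_inf)
next
  case (ax_vac p)
  then show ?case unfolding lift_shf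
    by (intro DvI[where ps="[pe 3 (enc_fm p), pe 6 (q4 1 0 (enc_fm p) (enc_fm (subst_fm (shf 1 0) p)))]"] RI_axvac)
       (auto simp: R_axvac_def nthc_list intro: C_wff C_shf)
next
  case (ax_dist p q)
  then show ?case
    by (-, intro DvI[where ps="[pe 3 (enc_fm p), pe 3 (enc_fm q)]"] RI_axdist, auto simp: R_axdist_def nthc_list intro: C_wff)
next
  case (ax_refl t)
  then show ?case
    by (-, intro DvI[where ps="[pe 1 (enc_tm t)]"] RI_axrefl, auto simp: R_axrefl_def nthc_list intro: C_wft C_wft')
next
  case (ax_leib p s t)
  then show ?case unfolding inst_sigi
    by (intro DvI[where ps="[pe 3 (enc_fm p), pe 1 (enc_tm s), pe 1 (enc_tm t),
          pe 9 (q4 0 (enc_tm s) (enc_fm p) (enc_fm (subst_fm (sigi 0 s) p))),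
          pe 9 (q4 0 (enc_tm t) (enc_fm p) (enc_fm (subst_fm (sigi 0 t) p)))]"] RI_axleib)
       (auto simp: R_axleib_def nthc_list intro: C_wff C_wft C_wft' C_inf)
next
  case (mp p q)
  then show ?case
    by (-, intro DvI[where ps="[pe 10 (enc_fm (Imp p q)), pe 10 (enc_fm p)]"] RI_mp, auto simp: R_mp_def nthc_list)
next
  case (gen p)
  then show ?case
    by (-, intro DvI[where ps="[pe 10 (enc_fm p)]"] RI_gen, auto simp: R_gen_def nthc_list)
qed

lemma C_imps: "set axs \<subseteq> Ax \<Longrightarrow> wf_fm L p \<Longrightarrow> Dv Rule (pe 11 (pe (enc_fm (foldr Imp axs p)) (enc_fm p)))"
proof (induction axs)
  case Nil
  then show ?case
    by (-, intro DvI[where ps="[pe 3 (enc_fm p)]"] RI_imps0, auto simp: R_imps0_def nthc_list intro: C_wff)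
next
  case (Cons a axs)
  then show ?case
    by (-, intro DvI[where ps="[pe 11 (pe (enc_fm (foldr Imp axs p)) (enc_fm p))]"] RI_imps1, auto simp: R_imps1_def nthc_list AXc_def)
qed

lemma C_thm: "thm_of (L, Ax) p \<Longrightarrow> Dv Rule (pe 12 (enc_fm p))"
proof -
  assume "thm_of (L, Ax) p"
  then obtain axs where ax: "set axs \<subseteq> Ax" "prov L (foldr Imp axs p)" unfolding thm_of_def by auto
  then have "wf_fm L p" using prov_wf wf_foldr by blast
  then show ?thesis
    by (intro DvI[where ps="[pe 10 (enc_fm (foldr Imp axs p)), pe 11 (pe (enc_fm (foldr Imp axs p)) (enc_fm p))]"] RI_thm)
       (use ax in \<open>auto simp: R_thm_def nthc_list intro: C_prov C_imps\<close>)
qed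

lemma C_T: "Dv Rule (pe 13 (pe n (enc_fm (T n))))"
proof (induction n)
  case 0
  show ?case by (intro DvI[where ps="[]"] RI_t0) (auto simp: R_t0_def T0)
next
  case (Suc n)
  then show ?case
    by (-, intro DvI[where ps="[pe 13 (pe n (enc_fm (T n)))]"] RI_tS, auto simp: R_tS_def nthc_list TS)
qed

lemma C_res1: "thm_of (L, Ax) (phi n) \<Longrightarrow> Dv Rule (pe 14 (pe n 1))"
  by (intro DvI[where ps="[pe 13 (pe n (enc_fm (T n))), pe 12 (enc_fm (phi n))]"] RI_res1)
     (auto simp: R_res1_def nthc_list phiE[symmetric] intro: C_T C_thm)

lemma C_res0: "thm_of (L, Ax) (Neg (phi n)) \<Longrightarrow> Dv Rule (pe 14 (pe n 0))"
proof -
  assume a: "thm_of (L, Ax) (Neg (phi n))"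
  have e: "enc_fm (Neg (phi n)) = eN (encG cD0 cPR (enc_fm (T n)))" by (simp add: Neg_def phiE)
  show ?thesis
    by (intro DvI[where ps="[pe 13 (pe n (enc_fm (T n))), pe 12 (enc_fm (Neg (phi n)))]"] RI_res0)
       (use a in \<open>auto simp: R_res0_def nthc_list e[symmetric] intro: C_T C_thm\<close>)
qed

end


lemma fv_Neg[simp]: "fv_fm (Neg p) = fv_fm p" by (simp add: Neg_def)
lemma fv_And[simp]: "fv_fm (And p q) = fv_fm p \<union> fv_fm q" by (simp add: And_def)
lemma fv_Top[simp]: "fv_fm Top = {}" by (simp add: Top_def)
lemma fv_Ex[simp]: "fv_fm (Ex p) = {i. Suc i \<in> fv_fm p}" by (simp add: Ex_def)
lemma wf_And[simp]: "wf_fm L (And p q) = (wf_fm L p \<and> wf_fm L q)" by (simp add: And_def)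
lemma wf_Top[simp]: "wf_fm L Top" by (simp add: Top_def)
lemma wf_Ex[simp]: "wf_fm L (Ex p) = wf_fm L p" by (simp add: Ex_def)

lemma enc_Neg: "enc_fm (Neg p) = eN (enc_fm p)" by (simp add: Neg_def)
lemma enc_And: "enc_fm (And p q) = eAnd (enc_fm p) (enc_fm q)" by (simp add: And_def Neg_def)
lemma enc_Ex: "enc_fm (Ex p) = eN (pe 4 (eN (enc_fm p)))" by (simp add: Ex_def Neg_def)

lemma wf_subst_var:
  assumes "wf_fm L p" "\<forall>i. \<exists>j. \<sigma> i = Var j"
  shows "wf_fm L (subst_fm \<sigma> p)"
proof (rule wf_subst_fm[OF assms(1)])
  show "\<forall>i. wf_tm L (\<sigma> i)"
  proof
    fix i
    from assms(2) obtain j where "\<sigma> i = Var j" by blast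
    then show "wf_tm L (\<sigma> i)" by simp
  qed
qed

lemma fv_subst_var: "fv_fm (subst_fm \<sigma> p) = (\<Union>i\<in>fv_fm p. fv_tm (\<sigma> i))"
  by (rule fv_subst_fm)

theorem mainTheorem3:
  fixes A B :: "nat set"
  assumes "rec_inseparable A B"
  shows "G1 (U_theory A B)"
  unfolding G1_def
proof (intro allI impI notI)
  fix S :: fo_theory
  assume H: "is_theory S \<and> rec_axiomatizable S \<and> consistent S \<and> interpretable (U_theory A B) S"
    and C: "complete S"
  obtain LS AxS where S: "S = (LS, AxS)" by (cases S)
  from H obtain I where I: "is_interpretation I (U_theory A B) S" unfolding interpretable_def by blast
  obtain Dm F R where Ieq: "I = (Dm, F, R)" by (cases I)
  have LU: "fst L_U 0 = Some 0" "fst L_U 1 = Some 1" "snd L_U 0 = Some 1"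
    by (simp_all add: L_U_def)
  have fstU: "fst (U_theory A B) = L_U" by (simp add: U_theory_def)
  have Iall: "wf_fm LS Dm \<and> fv_fm Dm \<subseteq> {0} \<and>
     (\<forall>f k. fst L_U f = Some k \<longrightarrow> wf_fm LS (F f) \<and> fv_fm (F f) \<subseteq> {0..k}) \<and>
     (\<forall>r k. snd L_U r = Some k \<longrightarrow> wf_fm LS (R r) \<and> fv_fm (R r) \<subseteq> {..<k}) \<and>
     (\<forall>p\<in>snd (U_theory A B). thm_of S (tr_fm I p))"
    using I unfolding is_interpretation_def Ieq S by (simp add: Let_def fstU)
  have Dm: "wf_fm LS Dm" "fv_fm Dm \<subseteq> {0}" using Iall by auto
  have F0: "wf_fm LS (F 0)" "fv_fm (F 0) \<subseteq> {0..0}" using Iall LU by blast+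
  have F1: "wf_fm LS (F 1)" "fv_fm (F 1) \<subseteq> {0..1}" using Iall LU by blast+
  have R0: "wf_fm LS (R 0)" "fv_fm (R 0) \<subseteq> {..<1}" using Iall LU by blast+
  have transl: "\<forall>p\<in>snd (U_theory A B). thm_of S (tr_fm I p)" using Iall by blast
  define D0 where "D0 = subst_fm (\<lambda>i. Var 0) Dm"
  define P1 where "P1 = And (subst_fm (\<lambda>i. if i = 0 then Var (Suc 0) else if i \<le> Suc 0 then Var (i - 1) else Var (Suc 0 + i)) (F (Suc 0))) Top"
  define PR where "PR = And (subst_fm (\<lambda>i. if i < Suc 0 then Var i else Var (Suc 0 + i)) (R 0)) Top"
  define T where "T n = tr_tm I (numeral_tm n)" for n
  define phi where "phi n = tr_fm I (Rel 0 [numeral_tm n])" for n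
  have T0_eq: "T 0 = And (subst_fm (\<lambda>i. if i = 0 then Var 0 else if i \<le> 0 then Var (i - 1) else Var (0 + i)) (F 0)) Top"
    by (simp add: T_def Ieq combine_def Exs_def Conjs_def)
  have TS_eq: "T (Suc n) = Ex (And D0 (And (subst_fm (\<lambda>m. if m = 0 then Var 0 else Var (Suc 0 + Suc 0 + m - 1)) (T n)) P1))" for n
    by (simp add: T_def Ieq combine_def Exs_def Conjs_def D0_def P1_def)
  have phi_eq: "phi n = Ex (And D0 (And (subst_fm (\<lambda>m. if m = 0 then Var 0 else Var (Suc 0 + 0 + m - 1)) (T n)) PR))" for n
    by (simp add: phi_def T_def Ieq combine_def Exs_def Conjs_def D0_def PR_def)
  have fvD0: "fv_fm D0 \<subseteq> {0}" unfolding D0_def fv_subst_fm by auto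
  have wfD0: "wf_fm LS D0" unfolding D0_def by (rule wf_subst_var[OF Dm(1)]) auto
  have fvP1: "fv_fm P1 \<subseteq> {0, 1}"
  proof
    fix x assume "x \<in> fv_fm P1"
    then obtain i where i: "i \<in> fv_fm (F (Suc 0))"
      "x \<in> fv_tm (if i = 0 then Var (Suc 0) else if i \<le> Suc 0 then Var (i - 1) else Var (Suc 0 + i))"
      unfolding P1_def by (auto simp: fv_subst_fm)
    then have "i \<le> 1" using F1(2) by auto
    then show "x \<in> {0, 1}" using i(2) by (auto split: if_splits)
  qed
  have F1s: "wf_fm LS (F (Suc 0))" using F1(1) by simp
  have wfP1: "wf_fm LS P1" unfolding P1_def wf_And using wf_subst_var[OF F1s] by auto
  have fvPR: "fv_fm PR \<subseteq> {0}"
  proof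
    fix x assume "x \<in> fv_fm PR"
    then obtain i where i: "i \<in> fv_fm (R 0)"
      "x \<in> fv_tm (if i < Suc 0 then Var i else Var (Suc 0 + i))"
      unfolding PR_def by (auto simp: fv_subst_fm)
    then have "i = 0" using R0(2) by auto
    then show "x \<in> {0}" using i(2) by auto
  qed
  have wfPR: "wf_fm LS PR" unfolding PR_def wf_And using wf_subst_var[OF R0(1)] by auto
  have Tf: "fv_fm (T n) \<subseteq> {0} \<and> wf_fm LS (T n)" for n
  proof (induction n)
    case 0
    have "fv_fm (T 0) \<subseteq> {0}" using F0(2) unfolding T0_eq by (auto simp: fv_subst_fm split: if_splits)
    moreover have "wf_fm LS (T 0)" unfolding T0_eq wf_And using wf_subst_var[OF F0(1)] by auto
    ultimately show ?case by blast
  next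
    case (Suc n)
    have e: "subst_fm (\<lambda>m. if m = 0 then Var 0 else Var (Suc 0 + Suc 0 + m - 1)) (T n) = T n"
      by (rule subst_fm_id) (use Suc in auto)
    show ?case unfolding TS_eq e using Suc fvD0 fvP1 wfD0 wfP1 by auto
  qed
  have TS': "T (Suc n) = Ex (And D0 (And (T n) P1))" for n
  proof -
    have e: "subst_fm (\<lambda>m. if m = 0 then Var 0 else Var (Suc 0 + Suc 0 + m - 1)) (T n) = T n"
      by (rule subst_fm_id) (use Tf[of n] in auto)
    show ?thesis unfolding TS_eq e ..
  qed
  have phi': "phi n = Ex (And D0 (And (T n) PR))" for n
  proof -
    have e: "subst_fm (\<lambda>m. if m = 0 then Var 0 else Var (Suc 0 + 0 + m - 1)) (T n) = T n"
      by (rule subst_fm_id) (use Tf[of n] in auto)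
    show ?thesis unfolding phi_eq e ..
  qed
  have sent: "sentence LS (phi n)" for n
  proof -
    have "fv_fm (phi n) = {}" unfolding phi' using Tf[of n] fvD0 fvPR by auto
    moreover have "wf_fm LS (phi n)" unfolding phi' using Tf[of n] wfD0 wfPR by auto
    ultimately show ?thesis by (simp add: sentence_def)
  qed
  have sentN: "sentence LS (Neg (phi n))" for n
    using sent[of n] by (simp add: sentence_def)
  from H have RA: "rec_axiomatizable S" by blast
  then have rl: "recursive_lang LS" unfolding rec_axiomatizable_def S by simp
  from RA obtain Ax where Ax: "\<forall>p\<in>Ax. sentence LS p" "recursive_set (enc_fm ` Ax)"
      "\<forall>p. sentence LS p \<longrightarrow> (thm_of (LS, Ax) p \<longleftrightarrow> thm_of S p)"
    unfolding rec_axiomatizable_def S by auto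
  interpret sys LS Ax "enc_fm (T 0)" "enc_fm D0" "enc_fm P1" "enc_fm PR" T phi
  proof
    show "enc_fm (T 0) = enc_fm (T 0)" ..
    show "enc_fm (T (Suc n)) = encG (enc_fm D0) (enc_fm P1) (enc_fm (T n))" for n
      unfolding TS' by (simp add: enc_Ex enc_And)
    show "enc_fm (phi n) = encG (enc_fm D0) (enc_fm PR) (enc_fm (T n))" for n
      unfolding phi' by (simp add: enc_Ex enc_And)
    show "recursive_set (LFc LS)" using rl unfolding recursive_lang_def LFc_def by simp
    show "recursive_set (LRc LS)" using rl unfolding recursive_lang_def LRc_def by simp
    show "recursive_set (AXc Ax)" using Ax(2) unfolding AXc_def .
  qed
  have tot: "\<forall>n. \<exists>b. Dv Rule (prod_encode (14, prod_encode (n, b)))"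
  proof
    fix n
    have "thm_of S (phi n) \<or> thm_of S (Neg (phi n))"
      using C sent[of n] unfolding complete_def S by auto
    then have "thm_of (LS, Ax) (phi n) \<or> thm_of (LS, Ax) (Neg (phi n))"
      using Ax(3) sent[of n] sentN[of n] by blast
    then show "\<exists>b. Dv Rule (prod_encode (14, prod_encode (n, b)))"
      using C_res1 C_res0 by blast
  qed
  obtain X where X: "recursive_set X"
    "\<And>n. n \<in> X \<Longrightarrow> Dv Rule (prod_encode (14, prod_encode (n, 1)))"
    "\<And>n. n \<notin> X \<Longrightarrow> (\<exists>b. b \<noteq> 1 \<and> Dv Rule (prod_encode (14, prod_encode (n, b))))"
    using decide[OF rpred_Rule tot] by blast
  have inX: "thm_of S (phi n)" if "n \<in> X" for n
  proof -
    have "Sem (pe 14 (pe n 1))" using sound X(2)[OF that] by blast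
    then have "thm_of (LS, Ax) (phi n)" by auto
    then show ?thesis using Ax(3) sent by blast
  qed
  have ninX: "thm_of S (Neg (phi n))" if nx: "n \<notin> X" for n
  proof -
    obtain b where b: "b \<noteq> 1" "Dv Rule (pe 14 (pe n b))" using X(3)[OF nx] by blast
    have "Sem (pe 14 (pe n b))" using sound b(2) by blast
    then have "thm_of (LS, Ax) (Neg (phi n))" using b(1) by auto
    then show ?thesis using Ax(3) sentN by blast
  qed
  have wfS: "\<forall>a\<in>snd S. wf_fm (fst S) a"
    using H unfolding is_theory_def sentence_def by blast
  have cons: "False" if "thm_of S (phi n)" "thm_of S (Neg (phi n))" for n
  proof -
    have "thm_of S Bot" using thm_mp[OF wfS, of "phi n" Bot] that by (simp add: Neg_def)
    then show False using H unfolding consistent_def by blast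
  qed
  have trNeg: "tr_fm I (Neg p) = Neg (tr_fm I p)" for p by (simp add: Neg_def)
  have "A \<subseteq> X"
  proof
    fix n assume "n \<in> A"
    then have "Rel 0 [numeral_tm n] \<in> snd (U_theory A B)" by (auto simp: U_theory_def)
    then have "thm_of S (phi n)" using transl unfolding phi_def by blast
    then show "n \<in> X" using ninX cons by blast
  qed
  moreover have "X \<inter> B = {}"
  proof -
    have "n \<notin> X" if "n \<in> B" for n
    proof -
      from that have "Neg (Rel 0 [numeral_tm n]) \<in> snd (U_theory A B)" by (auto simp: U_theory_def)
      then have "thm_of S (Neg (phi n))" using transl trNeg unfolding phi_def by metis
      then show ?thesis using inX cons by blast
    qed
    then show ?thesis by blast
  qed
  ultimately show False using assms X(1) unfolding rec_inseparable_def by blast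
qed

end
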